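(* Let $x$ be an allocation rule and suppose Assumptions D, X and T hold. Consider the Optimal Transfer Problem (P): maximize $\sum_{i=1}^2\int_\Theta T_i(\theta)\,dP(\theta)$ over transfer rules $t$ such that (i) $(x,t)$ is feasible and (ii) $t\in\mathcal{T}$. Consider also the Reduced Problem (R): maximize $\sum_{i=1}^2\int_\Theta T_i(\theta)\,dP(\theta)$ over transfer rules $t$ such that (i) $t$ is win-lose dependent (for $x$), (ii) $U_i^{\min}(\theta)=\int_{\underline\theta}^{\theta}X_i^{\min}(z)\,dz$ for every $i$ and every $\theta\in\Theta$, and (iii) $t\in\mathcal{T}$. Then every solution (maximizer) of problem (R) is a solution of problem (P).
   Context: Let $\Theta=[\underline\theta,\bar\theta]\subset\mathbb{R}$ with $0<\underline\theta<\bar\theta$, with Borel $\sigma$-algebra $\mathcal{B}$; "$\sigma$-algebra" always means a sub-$\sigma$-algebra of $\mathcal{B}$, and $\Delta(\Theta,\mathcal{A})$ is the set of probability measures on $(\Theta,\mathcal{A})$. For $\mathcal{E}\subset\mathcal{A}$ and $P\in\Delta(\Theta,\mathcal{A})$, $P_{\mathcal{E}}$ denotes the restriction of $P$ to $\mathcal{E}$. A divergence $D$ assigns to each pair $Q,P$ of probability measures on a common $\sigma$-algebra a number $D(Q\|P)\in[0,\infty]$. Assumption D: for every $\sigma$-algebra $\mathcal{A}$ and $P,Q\in\Delta(\Theta,\mathcal{A})$: (D1) $D(Q\|P)=0$ if $Q=P$; (D2) if $Q\ll P$ and $dQ/dP$ is bounded, then $\epsilon\mapsto D(\epsilon Q+(1-\epsilon)P\|P)$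 is continuous on $[0,1]$; (D3) if $D(Q\|P)<\infty$ then $Q\ll P$; (D4) for every sub-$\sigma$-algebra $\mathcal{E}\subset\mathcal{A}$, $D(Q_{\mathcal{E}}\|P_{\mathcal{E}})\le D(Q\|P)$; (D5) for every sub-$\sigma$-algebra $\mathcal{E}\subset\mathcal{A}$, $D(Q_{\mathcal{E}}\|P_{\mathcal{E}})=D(Q\|P)$ if $dQ_{\mathcal{E}}/dP_{\mathcal{E}}=dQ/dP$ $P$-a.e. Fix an atomless $P\in\Delta(\Theta,\mathcal{B})$ (the reference belief) and $\eta>0$; "a.e." means with respect to $P$ (or $P\otimes P$). There are two bidders $i\in\{1,2\}$. An allocation rule is a bounded measurable $x=(x_1,x_2):\Theta^2\to\mathbb{R}^2$ with $x_1(\theta,\theta')\ge0$, $x_2(\theta',\theta)\ge0$, $x_1(\theta,\theta')+x_2(\theta',\theta)\le1$ for all $\theta,\theta'$; a transfer rule is a bounded measurable $t=(t_1,t_2):\Theta^2\to\mathbb{R}^2$ ($x_i(\theta,\theta')$, $t_i(\theta,\theta')$ are bidder $i$'s winning probability and payment when she reports $\theta$ and the other reports $\theta'$). Define $X_i(\theta)=\int x_i(\theta,\theta')dP(\theta')$, $X_i^{\min}(\theta)=\inf_Q\{\int x_i(\theta,\theta')dQ(\theta'):D(Q\|P)\le\eta\}$, $U_i^{\min}(\theta)=\inf_Q\{\int[\theta x_i(\theta,\theta')-t_i(\theta,\theta')]dQ(\theta'):D(Q\|P)\le\eta\}$, $T_i(\theta)=\int t_i(\theta,\theta')dP(\theta')$,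 where $Q$ ranges over $\Delta(\Theta,\mathcal{B})$. $(x,t)$ is incentive compatible if for all $i,\theta$, $\theta$ maximizes over $\hat\theta\in\Theta$ the quantity $\inf_Q\{\int[\theta x_i(\hat\theta,\theta')-t_i(\hat\theta,\theta')]dQ(\theta'):D(Q\|P)\le\eta\}$; individually rational if $U_i^{\min}(\theta)\ge0$ for all $i,\theta$; feasible if both hold. Assumption X (on $x$): (i) $x_i(\theta,\theta')\in\{0,1\}$ whenever $\theta'\neq\theta$; (ii) $X_i(\theta)=1$ implies $\theta=\bar\theta$; (iii) $X_i^{\min}$ is non-decreasing. Assumption T: constants $0\le\alpha\le\beta\le1$, $K\ge0$ are given, and $\mathcal{T}$ is the class of transfer rules $t$ such that for every $i$, every $\theta<\bar\theta$ and all $\theta^w,\theta^l$ with $x_i(\theta,\theta^w)=1$ and $x_i(\theta,\theta^l)=0$, one has $\alpha t_i(\theta,\theta^w)-\beta t_i(\theta,\theta^l)\le K$. A transfer rule $t$ is win-lose dependent (for $x$) if there exist $t_i^w,t_i^l:\Theta\to\mathbb{R}$ with $t_i(\theta,\theta')=t_i^w(\theta)x_i(\theta,\theta')+t_i^l(\theta)[1-x_i(\theta,\theta')]$ and $\theta-t_i^w(\theta)\ge-t_i^l(\theta)$ for all $i,\theta,\theta'$. *)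

theory Defs
  imports "HOL-Probability.Probability"
begin

definition Bor :: "real \<Rightarrow> real \<Rightarrow> real measure" where
  "Bor a b = restrict_space borel {a..b}"

definition subsigma :: "real set \<Rightarrow> real set set \<Rightarrow> bool" where
  "subsigma S A \<longleftrightarrow> sigma_algebra S A \<and> A \<subseteq> sets (restrict_space borel S)"

definition prob_on :: "real set \<Rightarrow> real set set \<Rightarrow> real measure \<Rightarrow> bool" where
  "prob_on S A Q \<longleftrightarrow> prob_space Q \<and> space Q = S \<and> sets Q = A"

definition restr :: "real measure \<Rightarrow> real set set \<Rightarrow> real measure" where
  "restr Q E = measure_of (space Q) E (emeasure Q)"

definition mix :: "real \<Rightarrow> real measure \<Rightarrow> real measure \<Rightarrow> real measure" where
  "mix e Q P = measure_of (space P) (sets P)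
     (\<lambda>A. ennreal e * emeasure Q A + ennreal (1 - e) * emeasure P A)"

definition atomless :: "real measure \<Rightarrow> bool" where
  "atomless P \<longleftrightarrow> \<not> (\<exists>A\<in>sets P. emeasure P A > 0 \<and>
      (\<forall>B\<in>sets P. B \<subseteq> A \<longrightarrow> emeasure P B = 0 \<or> emeasure P B = emeasure P A))"

text \<open>Assumption D on a divergence D (D Q P stands for D(Q||P)).\<close>
definition assumption_D :: "real \<Rightarrow> real \<Rightarrow> (real measure \<Rightarrow> real measure \<Rightarrow> ennreal) \<Rightarrow> bool" where
  "assumption_D a b D \<longleftrightarrow>
    (\<forall>A P Q. subsigma {a..b} A \<and> prob_on {a..b} A P \<and> prob_on {a..b} A Q \<longrightarrow>
      (Q = P \<longrightarrow> D Q P = 0) \<and>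
      (absolutely_continuous P Q \<and> (\<exists>C::real. AE z in P. RN_deriv P Q z \<le> ennreal C) \<longrightarrow>
         continuous_on {0..1} (\<lambda>e. D (mix e Q P) P)) \<and>
      (D Q P < \<infinity> \<longrightarrow> absolutely_continuous P Q) \<and>
      (\<forall>E. subsigma {a..b} E \<and> E \<subseteq> A \<longrightarrow>
         D (restr Q E) (restr P E) \<le> D Q P \<and>
         (absolutely_continuous P Q \<and>
          (AE z in P. RN_deriv (restr P E) (restr Q E) z = RN_deriv P Q z) \<longrightarrow>
            D (restr Q E) (restr P E) = D Q P)))"

text \<open>Bidders are indexed by 1 and 2; x i u v = winning probability of bidder i reporting u
  when the other bidder reports v.  Only values on {a..b} x {a..b} matter.\<close>

definition bounded_measurable_rule :: "real \<Rightarrow> real \<Rightarrow> (nat \<Rightarrow> real \<Rightarrow> real \<Rightarrow> real) \<Rightarrow> bool" where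
  "bounded_measurable_rule a b f \<longleftrightarrow>
    (\<forall>i\<in>{1,2}. (\<lambda>(u, v). f i u v) \<in> borel_measurable (Bor a b \<Otimes>\<^sub>M Bor a b) \<and>
       (\<exists>C. \<forall>u\<in>{a..b}. \<forall>v\<in>{a..b}. \<bar>f i u v\<bar> \<le> C))"

definition allocation_rule :: "real \<Rightarrow> real \<Rightarrow> (nat \<Rightarrow> real \<Rightarrow> real \<Rightarrow> real) \<Rightarrow> bool" where
  "allocation_rule a b x \<longleftrightarrow> bounded_measurable_rule a b x \<and>
    (\<forall>u\<in>{a..b}. \<forall>v\<in>{a..b}. x 1 u v \<ge> 0 \<and> x 2 v u \<ge> 0 \<and> x 1 u v + x 2 v u \<le> 1)"

definition transfer_rule :: "real \<Rightarrow> real \<Rightarrow> (nat \<Rightarrow> real \<Rightarrow> real \<Rightarrow> real) \<Rightarrow> bool" where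
  "transfer_rule a b t \<longleftrightarrow> bounded_measurable_rule a b t"

definition amb :: "real \<Rightarrow> real \<Rightarrow> (real measure \<Rightarrow> real measure \<Rightarrow> ennreal) \<Rightarrow> real measure \<Rightarrow> real \<Rightarrow> real measure set" where
  "amb a b D P \<eta> = {Q. prob_on {a..b} (sets (Bor a b)) Q \<and> D Q P \<le> ennreal \<eta>}"

definition Xexp :: "real measure \<Rightarrow> (nat \<Rightarrow> real \<Rightarrow> real \<Rightarrow> real) \<Rightarrow> nat \<Rightarrow> real \<Rightarrow> real" where
  "Xexp P x i \<theta> = (\<integral>\<theta>'. x i \<theta> \<theta>' \<partial>P)"

definition Xmin :: "real \<Rightarrow> real \<Rightarrow> (real measure \<Rightarrow> real measure \<Rightarrow> ennreal) \<Rightarrow> real measure \<Rightarrow> real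
    \<Rightarrow> (nat \<Rightarrow> real \<Rightarrow> real \<Rightarrow> real) \<Rightarrow> nat \<Rightarrow> real \<Rightarrow> real" where
  "Xmin a b D P \<eta> x i \<theta> = Inf ((\<lambda>Q. \<integral>\<theta>'. x i \<theta> \<theta>' \<partial>Q) ` amb a b D P \<eta>)"

text \<open>Worst-case utility of type th when reporting th_hat.\<close>
definition Urep :: "real \<Rightarrow> real \<Rightarrow> (real measure \<Rightarrow> real measure \<Rightarrow> ennreal) \<Rightarrow> real measure \<Rightarrow> real
    \<Rightarrow> (nat \<Rightarrow> real \<Rightarrow> real \<Rightarrow> real) \<Rightarrow> (nat \<Rightarrow> real \<Rightarrow> real \<Rightarrow> real) \<Rightarrow> nat \<Rightarrow> real \<Rightarrow> real \<Rightarrow> real" where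
  "Urep a b D P \<eta> x t i \<theta> \<theta>h =
     Inf ((\<lambda>Q. \<integral>\<theta>'. \<theta> * x i \<theta>h \<theta>' - t i \<theta>h \<theta>' \<partial>Q) ` amb a b D P \<eta>)"

definition Umin :: "real \<Rightarrow> real \<Rightarrow> (real measure \<Rightarrow> real measure \<Rightarrow> ennreal) \<Rightarrow> real measure \<Rightarrow> real
    \<Rightarrow> (nat \<Rightarrow> real \<Rightarrow> real \<Rightarrow> real) \<Rightarrow> (nat \<Rightarrow> real \<Rightarrow> real \<Rightarrow> real) \<Rightarrow> nat \<Rightarrow> real \<Rightarrow> real" where
  "Umin a b D P \<eta> x t i \<theta> =
     Inf ((\<lambda>Q. \<integral>\<theta>'. \<theta> * x i \<theta> \<theta>' - t i \<theta> \<theta>' \<partial>Q) ` amb a b D P \<eta>)"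

definition Texp :: "real measure \<Rightarrow> (nat \<Rightarrow> real \<Rightarrow> real \<Rightarrow> real) \<Rightarrow> nat \<Rightarrow> real \<Rightarrow> real" where
  "Texp P t i \<theta> = (\<integral>\<theta>'. t i \<theta> \<theta>' \<partial>P)"

definition incentive_compatible where
  "incentive_compatible a b D P \<eta> x t \<longleftrightarrow>
     (\<forall>i\<in>{1,2::nat}. \<forall>\<theta>\<in>{a..b}. \<forall>\<theta>h\<in>{a..b}.
        Urep a b D P \<eta> x t i \<theta> \<theta>h \<le> Urep a b D P \<eta> x t i \<theta> \<theta>)"

definition individually_rational where
  "individually_rational a b D P \<eta> x t \<longleftrightarrow>
     (\<forall>i\<in>{1,2::nat}. \<forall>\<theta>\<in>{a..b}. Umin a b D P \<eta> x t i \<theta> \<ge> 0)"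

definition feasible where
  "feasible a b D P \<eta> x t \<longleftrightarrow>
     incentive_compatible a b D P \<eta> x t \<and> individually_rational a b D P \<eta> x t"

definition assumption_X where
  "assumption_X a b D P \<eta> x \<longleftrightarrow>
     (\<forall>i\<in>{1,2::nat}.
        (\<forall>\<theta>\<in>{a..b}. \<forall>\<theta>'\<in>{a..b}. \<theta>' \<noteq> \<theta> \<longrightarrow> x i \<theta> \<theta>' \<in> {0,1}) \<and>
        (\<forall>\<theta>\<in>{a..b}. Xexp P x i \<theta> = 1 \<longrightarrow> \<theta> = b) \<and>
        mono_on {a..b} (Xmin a b D P \<eta> x i))"

definition Tclass :: "real \<Rightarrow> real \<Rightarrow> real \<Rightarrow> real \<Rightarrow> real
    \<Rightarrow> (nat \<Rightarrow> real \<Rightarrow> real \<Rightarrow> real) \<Rightarrow> (nat \<Rightarrow> real \<Rightarrow> real \<Rightarrow> real) \<Rightarrow> bool" where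
  "Tclass a b \<alpha> \<beta> K x t \<longleftrightarrow>
     (\<forall>i\<in>{1,2::nat}. \<forall>\<theta>\<in>{a..b}. \<theta> < b \<longrightarrow>
        (\<forall>\<theta>w\<in>{a..b}. \<forall>\<theta>l\<in>{a..b}. x i \<theta> \<theta>w = 1 \<and> x i \<theta> \<theta>l = 0 \<longrightarrow>
            \<alpha> * t i \<theta> \<theta>w - \<beta> * t i \<theta> \<theta>l \<le> K))"

definition win_lose_dependent :: "real \<Rightarrow> real \<Rightarrow> (nat \<Rightarrow> real \<Rightarrow> real \<Rightarrow> real)
    \<Rightarrow> (nat \<Rightarrow> real \<Rightarrow> real \<Rightarrow> real) \<Rightarrow> bool" where
  "win_lose_dependent a b x t \<longleftrightarrow>
     (\<exists>tw tl :: nat \<Rightarrow> real \<Rightarrow> real. \<forall>i\<in>{1,2::nat}. \<forall>\<theta>\<in>{a..b}.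
        \<theta> - tw i \<theta> \<ge> - tl i \<theta> \<and>
        (\<forall>\<theta>'\<in>{a..b}. t i \<theta> \<theta>' = tw i \<theta> * x i \<theta> \<theta>' + tl i \<theta> * (1 - x i \<theta> \<theta>')))"

definition revenue :: "real measure \<Rightarrow> (nat \<Rightarrow> real \<Rightarrow> real \<Rightarrow> real) \<Rightarrow> real" where
  "revenue P t = (\<Sum>i\<in>{1,2::nat}. \<integral>\<theta>. Texp P t i \<theta> \<partial>P)"

definition constraints_P where
  "constraints_P a b D P \<eta> \<alpha> \<beta> K x t \<longleftrightarrow>
     transfer_rule a b t \<and> feasible a b D P \<eta> x t \<and> Tclass a b \<alpha> \<beta> K x t"

definition constraints_R where
  "constraints_R a b D P \<eta> \<alpha> \<beta> K x t \<longleftrightarrow>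
     transfer_rule a b t \<and> win_lose_dependent a b x t \<and>
     (\<forall>i\<in>{1,2::nat}. \<forall>\<theta>\<in>{a..b}.
        Umin a b D P \<eta> x t i \<theta> = integral {a..\<theta>} (Xmin a b D P \<eta> x i)) \<and>
     Tclass a b \<alpha> \<beta> K x t"

definition solves :: "real measure \<Rightarrow> ((nat \<Rightarrow> real \<Rightarrow> real \<Rightarrow> real) \<Rightarrow> bool)
    \<Rightarrow> (nat \<Rightarrow> real \<Rightarrow> real \<Rightarrow> real) \<Rightarrow> bool" where
  "solves P C t \<longleftrightarrow> C t \<and> (\<forall>t'. C t' \<longrightarrow> revenue P t' \<le> revenue P t)"

end

theory Submission
  imports Defs
begin

lemma space_Bor[simp]: "space (Bor a b) = {a..b}" by (simp add: Bor_def)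

lemma prob_onD:
  assumes "prob_on {a..b} (sets (Bor a b)) Q"
  shows "prob_space Q" "space Q = {a..b}" "sets Q = sets (Bor a b)"
  using assms by (auto simp: prob_on_def)

lemma meas_Q:
  assumes "prob_on {a..b} (sets (Bor a b)) Q" "g \<in> borel_measurable (Bor a b)"
  shows "g \<in> borel_measurable Q"
  using assms measurable_cong_sets[of Q "Bor a b" borel borel] prob_onD by auto

lemma int_Q:
  fixes g :: "real \<Rightarrow> real"
  assumes Q: "prob_on {a..b} (sets (Bor a b)) Q" and g: "g \<in> borel_measurable (Bor a b)"
    and bd: "\<And>v. v \<in> {a..b} \<Longrightarrow> \<bar>g v\<bar> \<le> C"
  shows "integrable Q g"
proof -
  interpret prob_space Q using prob_onD[OF Q] by simp
  show ?thesis
    by (rule integrable_const_bound[where B=C]) (use bd prob_onD(2)[OF Q] meas_Q[OF Q g] in auto)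
qed

lemma int_Q_ge:
  fixes g :: "real \<Rightarrow> real"
  assumes Q: "prob_on {a..b} (sets (Bor a b)) Q" and g: "g \<in> borel_measurable (Bor a b)"
    and bd: "\<And>v. v \<in> {a..b} \<Longrightarrow> \<bar>g v\<bar> \<le> C"
    and lo: "\<And>v. v \<in> {a..b} \<Longrightarrow> m \<le> g v"
  shows "m \<le> (\<integral>v. g v \<partial>Q)"
proof -
  interpret prob_space Q using prob_onD[OF Q] by simp
  show ?thesis
    by (rule integral_ge_const) (use int_Q[OF Q g bd] lo prob_onD(2)[OF Q] in auto)
qed

lemma int_Q_le:
  fixes g :: "real \<Rightarrow> real"
  assumes Q: "prob_on {a..b} (sets (Bor a b)) Q" and g: "g \<in> borel_measurable (Bor a b)"
    and bd: "\<And>v. v \<in> {a..b} \<Longrightarrow> \<bar>g v\<bar> \<le> C"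
    and hi: "\<And>v. v \<in> {a..b} \<Longrightarrow> g v \<le> m"
  shows "(\<integral>v. g v \<partial>Q) \<le> m"
proof -
  interpret prob_space Q using prob_onD[OF Q] by simp
  show ?thesis
    by (rule integral_le_const) (use int_Q[OF Q g bd] hi prob_onD(2)[OF Q] in auto)
qed

lemma int_Q_aff:
  fixes g :: "real \<Rightarrow> real"
  assumes Q: "prob_on {a..b} (sets (Bor a b)) Q" and g: "g \<in> borel_measurable (Bor a b)"
    and bd: "\<And>v. v \<in> {a..b} \<Longrightarrow> \<bar>g v\<bar> \<le> C"
  shows "(\<integral>v. k * g v - m \<partial>Q) = k * (\<integral>v. g v \<partial>Q) - m"
proof -
  interpret prob_space Q using prob_onD[OF Q] by simp
  have i: "integrable Q g" using int_Q[OF Q g bd] .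
  have "(\<integral>v. k * g v - m \<partial>Q) = (\<integral>v. k * g v \<partial>Q) - (\<integral>v. m \<partial>Q)"
    by (intro Bochner_Integration.integral_diff) (use i in auto)
  also have "\<dots> = k * (\<integral>v. g v \<partial>Q) - m" by (simp add: prob_space)
  finally show ?thesis .
qed

lemma int_Q_cong:
  assumes Q: "prob_on {a..b} (sets (Bor a b)) Q"
    and "\<And>v. v \<in> {a..b} \<Longrightarrow> f v = g v"
  shows "(\<integral>v. f v \<partial>Q) = (\<integral>v. (g v::real) \<partial>Q)"
  by (rule Bochner_Integration.integral_cong) (use assms prob_onD(2)[OF Q] in auto)

lemma sect_meas:
  assumes "bounded_measurable_rule a b f" "i \<in> {1,2}" "u \<in> {a..b}"
  shows "f i u \<in> borel_measurable (Bor a b)"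
proof -
  have "(\<lambda>(u, v). f i u v) \<in> borel_measurable (Bor a b \<Otimes>\<^sub>M Bor a b)"
    using assms unfolding bounded_measurable_rule_def by auto
  from measurable_Pair2[OF this, of u] show ?thesis using assms by simp
qed

lemma sect_bound:
  assumes "bounded_measurable_rule a b f" "i \<in> {1,2}"
  obtains C where "\<And>u v. u \<in> {a..b} \<Longrightarrow> v \<in> {a..b} \<Longrightarrow> \<bar>f i u v\<bar> \<le> C"
  using assms unfolding bounded_measurable_rule_def by blast

lemma x_bounds:
  assumes "allocation_rule a b x" "i \<in> {1,2}" "u \<in> {a..b}" "v \<in> {a..b}"
  shows "0 \<le> x i u v" "x i u v \<le> 1"
  using assms unfolding allocation_rule_def by auto (smt (verit) atLeastAtMost_iff)+

lemma inf_aff_le: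
  fixes F :: "'a \<Rightarrow> real"
  assumes "Q0 \<in> S" "\<And>Q. Q \<in> S \<Longrightarrow> lo \<le> F Q \<and> F Q \<le> hi"
  shows "(INF Q\<in>S. k * F Q - m) \<le> k * (INF Q\<in>S. F Q) - m"
proof -
  have bF: "bdd_below (F ` S)" using assms(2) by (auto intro!: bdd_belowI[where m=lo])
  have bG: "bdd_below ((\<lambda>Q. k * F Q - m) ` S)"
  proof (rule bdd_belowI[where m="- \<bar>k\<bar> * max \<bar>lo\<bar> \<bar>hi\<bar> - m"], clarify)
    fix Q assume "Q \<in> S"
    then have "\<bar>F Q\<bar> \<le> max \<bar>lo\<bar> \<bar>hi\<bar>" using assms(2) by force
    then have "\<bar>k * F Q\<bar> \<le> \<bar>k\<bar> * max \<bar>lo\<bar> \<bar>hi\<bar>" by (simp add: abs_mult mult_left_mono)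
    then show "- \<bar>k\<bar> * max \<bar>lo\<bar> \<bar>hi\<bar> - m \<le> k * F Q - m" by linarith
  qed
  show ?thesis
  proof (cases "k > 0")
    case True
    have "(INF Q\<in>S. k * F Q - m) + m \<le> k * F Q" if "Q \<in> S" for Q
      using cINF_lower[OF bG that] by simp
    then have "((INF Q\<in>S. k * F Q - m) + m) / k \<le> F Q" if "Q \<in> S" for Q
      using that True by (simp add: divide_le_eq mult.commute)
    then have "((INF Q\<in>S. k * F Q - m) + m) / k \<le> (INF Q\<in>S. F Q)"
      using assms(1) by (intro cINF_greatest) auto
    then show ?thesis using True by (simp add: divide_le_eq mult.commute)
  next
    case False
    have "(INF Q\<in>S. k * F Q - m) \<le> k * F Q0 - m" using cINF_lower[OF bG assms(1)] .
    also have "\<dots> \<le> k * (INF Q\<in>S. F Q) - m"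
      using cINF_lower[OF bF assms(1)] False by (simp add: mult_left_mono_neg)
    finally show ?thesis .
  qed
qed

lemma inf_aff_ge:
  fixes F :: "'a \<Rightarrow> real"
  assumes "Q0 \<in> S" "\<And>Q. Q \<in> S \<Longrightarrow> lo \<le> F Q \<and> F Q \<le> hi" "k \<ge> 0"
  shows "k * (INF Q\<in>S. F Q) - m \<le> (INF Q\<in>S. k * F Q - m)"
proof -
  have bF: "bdd_below (F ` S)" using assms(2) by (auto intro!: bdd_belowI[where m=lo])
  have "k * (INF Q\<in>S. F Q) - m \<le> k * F Q - m" if "Q \<in> S" for Q
    using cINF_lower[OF bF that] assms(3) by (simp add: mult_left_mono)
  then show ?thesis using assms(1) by (intro cINF_greatest) auto
qed

lemma mono_int:
  fixes f :: "real \<Rightarrow> real"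
  assumes m: "mono_on {a..b} f" and s: "a \<le> s" "s \<le> s'" "s' \<le> b"
  shows "integral {a..s'} f = integral {a..s} f + integral {s..s'} f"
    "(s' - s) * f s \<le> integral {s..s'} f" "integral {s..s'} f \<le> (s' - s) * f s'"
proof -
  have m': "mono_on {a..s'} f" using m by (rule mono_on_subset) (use s in auto)
  have i: "f integrable_on {a..s'}" by (rule integrable_on_mono_on[OF m'])
  show "integral {a..s'} f = integral {a..s} f + integral {s..s'} f"
    using Henstock_Kurzweil_Integration.integral_combine[OF s(1,2) i] by simp
  have i2: "f integrable_on {s..s'}"
    by (rule integrable_on_mono_on, rule mono_on_subset[OF m]) (use s in auto)
  have "integral {s..s'} (\<lambda>_. f s) \<le> integral {s..s'} f"
    by (rule integral_le) (use i2 s in \<open>auto intro!: mono_onD[OF m]\<close>)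
  then show "(s' - s) * f s \<le> integral {s..s'} f" using s by simp
  have "integral {s..s'} f \<le> integral {s..s'} (\<lambda>_. f s')"
    by (rule integral_le) (use i2 s in \<open>auto intro!: mono_onD[OF m]\<close>)
  then show "integral {s..s'} f \<le> (s' - s) * f s'" using s by simp
qed

lemma envelope_V:
  fixes f :: "real \<Rightarrow> real"
  assumes m: "mono_on {a..b} f" and th: "th \<in> {a..b}" "s \<in> {a..b}"
  shows "integral {a..s} f + (th - s) * f s \<le> integral {a..th} f"
proof (cases "s \<le> th")
  case True
  then show ?thesis using mono_int[OF m, of s th] th by auto
next
  case False
  then show ?thesis using mono_int[OF m, of th s] th by (auto simp: algebra_simps)
qed

lemma P_amb:
  assumes "assumption_D a b D" "prob_on {a..b} (sets (Bor a b)) P" "\<eta> \<ge> 0"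
  shows "P \<in> amb a b D P \<eta>"
proof -
  have "sigma_algebra {a..b} (sets (Bor a b))"
    using sets.sigma_algebra_axioms[of "Bor a b"] by simp
  then have "subsigma {a..b} (sets (Bor a b))" by (simp add: subsigma_def Bor_def)
  then have "D P P = 0" using assms(1,2) unfolding assumption_D_def by blast
  then show ?thesis using assms unfolding amb_def by simp
qed

lemma amb_D:
  assumes "Q \<in> amb a b D P \<eta>"
  shows "prob_on {a..b} (sets (Bor a b)) Q" "D Q P \<le> ennreal \<eta>"
  using assms by (auto simp: amb_def)

lemma Xint_bounds:
  assumes "allocation_rule a b x" "i \<in> {1,2}" "u \<in> {a..b}" "Q \<in> amb a b D P \<eta>"
  shows "0 \<le> (\<integral>v. x i u v \<partial>Q) \<and> (\<integral>v. x i u v \<partial>Q) \<le> 1"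
proof -
  have xm: "bounded_measurable_rule a b x" using assms(1) by (simp add: allocation_rule_def)
  have Q: "prob_on {a..b} (sets (Bor a b)) Q" using amb_D[OF assms(4)] by simp
  have bd: "\<And>v. v \<in> {a..b} \<Longrightarrow> \<bar>x i u v\<bar> \<le> 1" using x_bounds[OF assms(1,2,3)] by fastforce
  show ?thesis
    using int_Q_ge[OF Q sect_meas[OF xm assms(2,3)] bd, of 0] int_Q_le[OF Q sect_meas[OF xm assms(2,3)] bd, of 1]
      x_bounds[OF assms(1,2,3)] by auto
qed

lemma Urep_wl:
  assumes al: "allocation_rule a b x" and i: "i \<in> {1,2}" and u: "u \<in> {a..b}"
    and Pa: "P \<in> amb a b D P \<eta>"
    and rep: "\<And>v. v \<in> {a..b} \<Longrightarrow> t i u v = tW * x i u v + tL * (1 - x i u v)"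
  shows "Urep a b D P \<eta> x t i th u \<le> (th - tW + tL) * Xmin a b D P \<eta> x i u - tL"
    and "th - tW + tL \<ge> 0 \<Longrightarrow> Urep a b D P \<eta> x t i th u = (th - tW + tL) * Xmin a b D P \<eta> x i u - tL"
proof -
  have xm: "bounded_measurable_rule a b x" using al by (simp add: allocation_rule_def)
  have bd: "\<And>v. v \<in> {a..b} \<Longrightarrow> \<bar>x i u v\<bar> \<le> 1" using x_bounds[OF al i u] by fastforce
  have eq: "(\<integral>v. th * x i u v - t i u v \<partial>Q) = (th - tW + tL) * (\<integral>v. x i u v \<partial>Q) - tL"
    if "Q \<in> amb a b D P \<eta>" for Q
  proof -
    have Q: "prob_on {a..b} (sets (Bor a b)) Q" using amb_D[OF that] by simp
    have "(\<integral>v. th * x i u v - t i u v \<partial>Q) = (\<integral>v. (th - tW + tL) * x i u v - tL \<partial>Q)"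
      by (rule int_Q_cong[OF Q]) (simp add: rep algebra_simps)
    also have "\<dots> = (th - tW + tL) * (\<integral>v. x i u v \<partial>Q) - tL"
      by (rule int_Q_aff[OF Q sect_meas[OF xm i u] bd])
    finally show ?thesis .
  qed
  have U: "Urep a b D P \<eta> x t i th u = (INF Q\<in>amb a b D P \<eta>. (th - tW + tL) * (\<integral>v. x i u v \<partial>Q) - tL)"
    unfolding Urep_def using eq by (intro INF_cong) auto
  have b: "\<And>Q. Q \<in> amb a b D P \<eta> \<Longrightarrow> 0 \<le> (\<integral>v. x i u v \<partial>Q) \<and> (\<integral>v. x i u v \<partial>Q) \<le> 1"
    using Xint_bounds[OF al i u] by blast
  show "Urep a b D P \<eta> x t i th u \<le> (th - tW + tL) * Xmin a b D P \<eta> x i u - tL"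
    unfolding U Xmin_def by (rule inf_aff_le[OF Pa b])
  show "th - tW + tL \<ge> 0 \<Longrightarrow> Urep a b D P \<eta> x t i th u = (th - tW + tL) * Xmin a b D P \<eta> x i u - tL"
    unfolding U Xmin_def by (intro antisym inf_aff_le[OF Pa b] inf_aff_ge[OF Pa b])
qed

lemma Urep_Umin: "Urep a b D P \<eta> x t i th th = Umin a b D P \<eta> x t i th"
  by (simp add: Urep_def Umin_def)

lemma Xmin_bounds:
  assumes al: "allocation_rule a b x" and i: "i \<in> {1,2}" and u: "u \<in> {a..b}"
    and Pa: "P \<in> amb a b D P \<eta>"
  shows "0 \<le> Xmin a b D P \<eta> x i u" "Xmin a b D P \<eta> x i u \<le> Xexp P x i u"
    "Xexp P x i u \<le> 1"
proof -
  have b: "\<And>Q. Q \<in> amb a b D P \<eta> \<Longrightarrow> 0 \<le> (\<integral>v. x i u v \<partial>Q) \<and> (\<integral>v. x i u v \<partial>Q) \<le> 1"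
    using Xint_bounds[OF al i u] by blast
  show "0 \<le> Xmin a b D P \<eta> x i u" unfolding Xmin_def
    using Pa b by (intro cINF_greatest) auto
  show "Xmin a b D P \<eta> x i u \<le> Xexp P x i u" unfolding Xmin_def Xexp_def
    using Pa b by (intro cINF_lower bdd_belowI[where m=0]) auto
  show "Xexp P x i u \<le> 1" unfolding Xexp_def using b[OF Pa] by simp
qed

lemma V_nonneg:
  fixes f :: "real \<Rightarrow> real"
  assumes "mono_on {a..b} f" "\<And>u. u \<in> {a..b} \<Longrightarrow> 0 \<le> f u" "th \<in> {a..b}"
  shows "0 \<le> integral {a..th} f"
proof -
  have "f integrable_on {a..th}"
    by (rule integrable_on_mono_on, rule mono_on_subset[OF assms(1)]) (use assms in auto)
  then show ?thesis by (rule integral_nonneg) (use assms in auto)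
qed

lemma partA:
  assumes D: "assumption_D a b D" and Pp: "prob_on {a..b} (sets (Bor a b)) P" and eta: "\<eta> > 0"
    and al: "allocation_rule a b x" and AX: "assumption_X a b D P \<eta> x"
    and R: "constraints_R a b D P \<eta> \<alpha> \<beta> K x t"
  shows "feasible a b D P \<eta> x t"
proof -
  have Pa: "P \<in> amb a b D P \<eta>" using P_amb[OF D Pp] eta by simp
  from R obtain tW tL where wl: "\<And>i th. i \<in> {1,2} \<Longrightarrow> th \<in> {a..b} \<Longrightarrow>
        th - tW i th \<ge> - tL i th \<and>
        (\<forall>v\<in>{a..b}. t i th v = tW i th * x i th v + tL i th * (1 - x i th v))"
    unfolding constraints_R_def win_lose_dependent_def by metis
  have UV: "\<And>i th. i \<in> {1,2} \<Longrightarrow> th \<in> {a..b} \<Longrightarrow>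
      Umin a b D P \<eta> x t i th = integral {a..th} (Xmin a b D P \<eta> x i)"
    using R unfolding constraints_R_def by blast
  have mono: "\<And>i. i \<in> {1,2} \<Longrightarrow> mono_on {a..b} (Xmin a b D P \<eta> x i)"
    using AX unfolding assumption_X_def by blast
  have IC: "Urep a b D P \<eta> x t i th h \<le> Urep a b D P \<eta> x t i th th"
    if i: "i \<in> {1,2}" and th: "th \<in> {a..b}" and h: "h \<in> {a..b}" for i th h
  proof -
    let ?X = "Xmin a b D P \<eta> x i"
    have rep: "\<And>v. v \<in> {a..b} \<Longrightarrow> t i h v = tW i h * x i h v + tL i h * (1 - x i h v)"
      using wl[OF i h] by blast
    have c: "h - tW i h + tL i h \<ge> 0" using wl[OF i h] by simp
    have "Urep a b D P \<eta> x t i th h \<le> (th - tW i h + tL i h) * ?X h - tL i h"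
      by (rule Urep_wl(1)[where tW="tW i h" and tL="tL i h" and t=t, OF al i h Pa rep])
    also have "\<dots> = ((h - tW i h + tL i h) * ?X h - tL i h) + (th - h) * ?X h"
      by (simp add: algebra_simps)
    also have "(h - tW i h + tL i h) * ?X h - tL i h = Urep a b D P \<eta> x t i h h"
      by (rule Urep_wl(2)[where tW="tW i h" and tL="tL i h" and t=t, OF al i h Pa rep c, symmetric])
    also have "\<dots> = integral {a..h} ?X" using UV[OF i h] Urep_Umin by metis
    also have "integral {a..h} ?X + (th - h) * ?X h \<le> integral {a..th} ?X"
      by (rule envelope_V[OF mono[OF i] th h])
    also have "\<dots> = Urep a b D P \<eta> x t i th th" using UV[OF i th] Urep_Umin by metis
    finally show ?thesis .
  qed
  have IR: "Umin a b D P \<eta> x t i th \<ge> 0" if i: "i \<in> {1,2}" and th: "th \<in> {a..b}" for i th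
    unfolding UV[OF i th]
    by (rule V_nonneg[OF mono[OF i] _ th]) (rule Xmin_bounds(1)[OF al i _ Pa])
  show ?thesis unfolding feasible_def incentive_compatible_def individually_rational_def
    using IC IR by blast
qed

lemma restr_facts:
  assumes Q: "prob_on {a..b} (sets (Bor a b)) Q" and E: "sigma_algebra {a..b} E" "E \<subseteq> sets (Bor a b)"
  shows "space (restr Q E) = {a..b}" "sets (restr Q E) = E"
    "\<And>A. A \<in> E \<Longrightarrow> emeasure (restr Q E) A = emeasure Q A"
proof -
  have sQ: "space Q = {a..b}" "sets Q = sets (Bor a b)" using prob_onD[OF Q] by auto
  have Pow: "E \<subseteq> Pow {a..b}" using E(1) unfolding sigma_algebra_def algebra_def ring_of_sets_def semiring_of_sets_def subset_class_def by auto
  show "space (restr Q E) = {a..b}" unfolding restr_def sQ using Pow by simp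
  show "sets (restr Q E) = E" unfolding restr_def sQ using Pow sigma_algebra.sigma_sets_eq[OF E(1)] by simp
  fix A assume A: "A \<in> E"
  have pos: "positive E (emeasure Q)" by (simp add: positive_def)
  have ca: "countably_additive E (emeasure Q)"
    unfolding countably_additive_def
  proof (intro allI impI)
    fix F :: "nat \<Rightarrow> real set" assume "range F \<subseteq> E" "disjoint_family F"
    then show "(\<Sum>i. emeasure Q (F i)) = emeasure Q (\<Union> (range F))"
      using E(2) sQ(2) by (intro suminf_emeasure) auto
  qed
  show "emeasure (restr Q E) A = emeasure Q A"
    unfolding restr_def sQ by (rule emeasure_measure_of_sigma[OF E(1) pos ca A])
qed

lemma D_inst:
  assumes D: "assumption_D a b D" and A: "subsigma {a..b} A" and P: "prob_on {a..b} A P" and Q: "prob_on {a..b} A Q"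
  shows "Q = P \<Longrightarrow> D Q P = 0"
    and "D Q P < \<infinity> \<Longrightarrow> absolutely_continuous P Q"
    and "subsigma {a..b} E \<Longrightarrow> E \<subseteq> A \<Longrightarrow> D (restr Q E) (restr P E) \<le> D Q P"
    and "subsigma {a..b} E \<Longrightarrow> E \<subseteq> A \<Longrightarrow> absolutely_continuous P Q \<Longrightarrow>
         (AE z in P. RN_deriv (restr P E) (restr Q E) z = RN_deriv P Q z) \<Longrightarrow>
         D (restr Q E) (restr P E) = D Q P"
proof -
  note H = D[unfolded assumption_D_def, rule_format, OF conjI[OF A conjI[OF P Q]]]
  show "Q = P \<Longrightarrow> D Q P = 0" using H by (elim conjE) (erule mp)
  show "D Q P < \<infinity> \<Longrightarrow> absolutely_continuous P Q" using H by (elim conjE) (erule mp)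
  have H4: "\<forall>E. subsigma {a..b} E \<and> E \<subseteq> A \<longrightarrow>
         D (restr Q E) (restr P E) \<le> D Q P \<and>
         (absolutely_continuous P Q \<and>
          (AE z in P. RN_deriv (restr P E) (restr Q E) z = RN_deriv P Q z) \<longrightarrow>
            D (restr Q E) (restr P E) = D Q P)" using H by (elim conjE)
  show "subsigma {a..b} E \<Longrightarrow> E \<subseteq> A \<Longrightarrow> D (restr Q E) (restr P E) \<le> D Q P"
    using H4 by blast
  show "subsigma {a..b} E \<Longrightarrow> E \<subseteq> A \<Longrightarrow> absolutely_continuous P Q \<Longrightarrow>
         (AE z in P. RN_deriv (restr P E) (restr Q E) z = RN_deriv P Q z) \<Longrightarrow>
         D (restr Q E) (restr P E) = D Q P"
    using H4 by blast
qed

lemma coarsen: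
  fixes u :: "real \<Rightarrow> real"
  assumes D: "assumption_D a b D" and Pp: "prob_on {a..b} (sets (Bor a b)) P"
    and Qa: "Q \<in> amb a b D P \<eta>"
    and W: "W \<in> sets (Bor a b)" and pW: "0 < measure P W" "measure P W < 1"
    and um: "u \<in> borel_measurable (Bor a b)" and ub: "\<And>v. v \<in> {a..b} \<Longrightarrow> \<bar>u v\<bar> \<le> C"
  shows "\<exists>Q'\<in>amb a b D P \<eta>. (\<integral>v. u v \<partial>Q') =
      measure Q W * ((\<integral>v. indicator W v * u v \<partial>P) / measure P W) +
      measure Q ({a..b} - W) * ((\<integral>v. indicator ({a..b} - W) v * u v \<partial>P) / measure P ({a..b} - W))"
proof -
  define L where "L = {a..b} - W"
  have Qp: "prob_on {a..b} (sets (Bor a b)) Q" and DQ: "D Q P \<le> ennreal \<eta>" using amb_D[OF Qa] by auto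
  interpret P: prob_space P using prob_onD[OF Pp] by simp
  interpret Q: prob_space Q using prob_onD[OF Qp] by simp
  have sP: "sets P = sets (Bor a b)" "space P = {a..b}" using prob_onD[OF Pp] by auto
  have sQ: "sets Q = sets (Bor a b)" "space Q = {a..b}" using prob_onD[OF Qp] by auto
  have WP: "W \<in> sets P" "W \<in> sets Q" using W sP sQ by auto
  have Wsub: "W \<subseteq> {a..b}" using sets.sets_into_space[OF WP(1)] sP by simp
  have LP: "L \<in> sets P" "L \<in> sets Q" using WP sP sQ unfolding L_def by (metis sets.compl_sets)+
  have pL: "measure P L = 1 - measure P W" unfolding L_def using P.prob_compl[OF WP(1)] sP by simp
  have qL: "measure Q L = 1 - measure Q W" unfolding L_def using Q.prob_compl[OF WP(2)] sQ by simp
  have pLpos: "measure P L > 0" using pL pW by simp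
  define cW where "cW = measure Q W / measure P W"
  define cL where "cL = measure Q L / measure P L"
  have cpos: "cW \<ge> 0" "cL \<ge> 0" unfolding cW_def cL_def using pW pLpos by auto
  define g where "g = (\<lambda>v. if v \<in> W then cW else cL)"
  define gE where "gE = (\<lambda>v. if v \<in> W then ennreal cW else ennreal cL)"
  have gE_g: "gE = (\<lambda>v. ennreal (g v))" unfolding gE_def g_def by auto
  have gm: "g \<in> borel_measurable P" unfolding g_def
    by (rule measurable_If_set) (use WP(1) sP Wsub in \<open>auto simp: Int_absorb1 Int_absorb2\<close>)
  have gEm: "gE \<in> borel_measurable P" unfolding gE_g using gm by simp
  define Q' where "Q' = density P gE"
  have emQ': "emeasure Q' A = ennreal cW * emeasure P (A \<inter> W) + ennreal cL * emeasure P (A \<inter> L)"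
    if A: "A \<in> sets P" for A
  proof -
    have "emeasure Q' A = (\<integral>\<^sup>+v. gE v * indicator A v \<partial>P)"
      unfolding Q'_def using emeasure_density[OF gEm A] by (simp add: mult.commute)
    also have "\<dots> = (\<integral>\<^sup>+v. ennreal cW * indicator (A \<inter> W) v + ennreal cL * indicator (A \<inter> L) v \<partial>P)"
      by (rule nn_integral_cong) (auto simp: gE_def L_def sP indicator_def)
    also have "\<dots> = (\<integral>\<^sup>+v. ennreal cW * indicator (A \<inter> W) v \<partial>P) + (\<integral>\<^sup>+v. ennreal cL * indicator (A \<inter> L) v \<partial>P)"
      by (rule nn_integral_add) (use A WP LP in auto)
    also have "\<dots> = ennreal cW * emeasure P (A \<inter> W) + ennreal cL * emeasure P (A \<inter> L)"
      using A WP LP by (simp add: nn_integral_cmult_indicator)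
    finally show ?thesis .
  qed
  have emQ'W: "emeasure Q' W = emeasure Q W"
  proof -
    have "emeasure Q' W = ennreal cW * emeasure P W"
      using emQ'[OF WP(1)] by (simp add: L_def Int_absorb Diff_disjoint)
    also have "\<dots> = ennreal (cW * measure P W)" using cpos by (simp add: P.emeasure_eq_measure ennreal_mult)
    also have "\<dots> = emeasure Q W" using pW by (simp add: cW_def Q.emeasure_eq_measure)
    finally show ?thesis .
  qed
  have emQ'L: "emeasure Q' L = emeasure Q L"
  proof -
    have "emeasure Q' L = ennreal cL * emeasure P L"
      using emQ'[OF LP(1)] by (simp add: L_def Int_absorb Diff_disjoint Int_commute)
    also have "\<dots> = ennreal (cL * measure P L)" using cpos by (simp add: P.emeasure_eq_measure ennreal_mult)
    also have "\<dots> = emeasure Q L" using pLpos by (simp add: cL_def Q.emeasure_eq_measure)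
    finally show ?thesis .
  qed
  have WL: "{a..b} = W \<union> L" "W \<inter> L = {}" using Wsub unfolding L_def by auto
  have emQ'S: "emeasure Q' {a..b} = 1"
  proof -
    have "emeasure Q' {a..b} = emeasure Q' W + emeasure Q' L"
      unfolding WL(1) by (rule plus_emeasure[symmetric]) (use WP LP WL in \<open>auto simp: Q'_def\<close>)
    also have "\<dots> = emeasure Q W + emeasure Q L" using emQ'W emQ'L by simp
    also have "\<dots> = emeasure Q {a..b}"
      unfolding WL(1) by (rule plus_emeasure) (use WP LP WL in auto)
    also have "\<dots> = 1" using Q.emeasure_space_1 sQ by simp
    finally show ?thesis .
  qed
  have Q'p: "prob_on {a..b} (sets (Bor a b)) Q'"
    unfolding prob_on_def using emQ'S sP by (auto simp: Q'_def intro!: prob_spaceI)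
  define E where "E = {{}, W, L, {a..b}}"
  have Esa: "sigma_algebra {a..b} E" unfolding E_def L_def by (rule sigma_algebra_single_set[OF Wsub])
  have Esub: "E \<subseteq> sets (Bor a b)" unfolding E_def using W LP sP sets.top[of "Bor a b"] by auto
  have Esub': "subsigma {a..b} E" using Esa Esub by (simp add: subsigma_def Bor_def)
  have Ssig: "subsigma {a..b} (sets (Bor a b))"
    using sets.sigma_algebra_axioms[of "Bor a b"] by (simp add: subsigma_def Bor_def)
  have restr_eq: "restr Q' E = restr Q E"
  proof -
    have sQ': "space Q' = {a..b}" using Q'p by (simp add: prob_on_def)
    have Pow: "E \<subseteq> Pow {a..b}" using Esa unfolding sigma_algebra_def algebra_def ring_of_sets_def semiring_of_sets_def subset_class_def by auto
    show ?thesis unfolding restr_def sQ' sQ(2)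
    proof (rule measure_of_eq[OF Pow])
      fix A assume "A \<in> sigma_sets {a..b} E"
      then have "A \<in> E" using sigma_algebra.sigma_sets_eq[OF Esa] by simp
      then show "emeasure Q' A = emeasure Q A"
        unfolding E_def using emQ'W emQ'L emQ'S Q.emeasure_space_1 sQ by auto
    qed
  qed
  have D4: "D (restr Q E) (restr P E) \<le> D Q P"
    by (rule D_inst(3)[OF D Ssig Pp Qp Esub' Esub])
  have PR: "space (restr P E) = {a..b}" "sets (restr P E) = E" "\<And>A. A \<in> E \<Longrightarrow> emeasure (restr P E) A = emeasure P A"
    using restr_facts[OF Pp Esa Esub] by auto
  have QR: "sets (restr Q' E) = E" "\<And>A. A \<in> E \<Longrightarrow> emeasure (restr Q' E) A = emeasure Q' A"
    using restr_facts[OF Q'p Esa Esub] by auto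
  interpret PRp: prob_space "restr P E"
    by (rule prob_spaceI) (use PR P.emeasure_space_1 sP Esa in \<open>auto simp: E_def\<close>)
  have gER: "gE \<in> borel_measurable (restr P E)" unfolding gE_def
    by (rule measurable_If_set) (use PR Wsub in \<open>auto simp: E_def Int_absorb1 Int_absorb2\<close>)
  have densR: "density (restr P E) gE = restr Q' E"
  proof (rule measure_eqI)
    show "sets (density (restr P E) gE) = sets (restr Q' E)" using PR QR by simp
    fix A assume "A \<in> sets (density (restr P E) gE)"
    then have A: "A \<in> E" using PR by simp
    have AP: "A \<in> sets P" using A Esub sP by auto
    have "emeasure (density (restr P E) gE) A = (\<integral>\<^sup>+v. gE v * indicator A v \<partial>restr P E)"
      using emeasure_density[OF gER] A PR by (simp add: mult.commute)
    also have "\<dots> = (\<integral>\<^sup>+v. gE v * indicator A v \<partial>P)"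
    proof (rule nn_integral_subalgebra)
      show "(\<lambda>v. gE v * indicator A v) \<in> borel_measurable (restr P E)"
        by (intro borel_measurable_times_ennreal gER borel_measurable_indicator) (use A PR in simp)
      show "sets (restr P E) \<subseteq> sets P" using PR Esub sP by simp
      show "space (restr P E) = space P" using PR sP by simp
      show "\<And>A. A \<in> sets (restr P E) \<Longrightarrow> emeasure (restr P E) A = emeasure P A" using PR by simp
    qed
    also have "\<dots> = emeasure Q' A"
      unfolding Q'_def using emeasure_density[OF gEm AP] by (simp add: mult.commute)
    also have "\<dots> = emeasure (restr Q' E) A" using QR A by simp
    finally show "emeasure (density (restr P E) gE) A = emeasure (restr Q' E) A" .
  qed
  have ae1: "AE z in restr P E. gE z = RN_deriv (restr P E) (restr Q' E) z"
    by (rule PRp.RN_deriv_unique[OF gER densR])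
  have ae2: "AE z in P. gE z = RN_deriv (restr P E) (restr Q' E) z"
  proof -
    let ?N = "{z \<in> space (restr P E). \<not> (gE z = RN_deriv (restr P E) (restr Q' E) z)}"
    have N: "?N \<in> sets (restr P E)"
    proof -
      have "{z \<in> space (restr P E). gE z = RN_deriv (restr P E) (restr Q' E) z} \<in> sets (restr P E)"
        by (rule borel_measurable_eq[OF gER borel_measurable_RN_deriv])
      then have "space (restr P E) - {z \<in> space (restr P E). gE z = RN_deriv (restr P E) (restr Q' E) z} \<in> sets (restr P E)"
        by (rule sets.compl_sets)
      moreover have "space (restr P E) - {z \<in> space (restr P E). gE z = RN_deriv (restr P E) (restr Q' E) z} = ?N" by auto
      ultimately show ?thesis by simp
    qed
    have "emeasure (restr P E) ?N = 0" by (rule AE_iff_measurable[OF N refl, THEN iffD1, OF ae1])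
    then have N0: "emeasure P ?N = 0" using PR(3)[of ?N] N PR(2) by simp
    have NP: "?N \<in> sets P" using N PR Esub sP by auto
    have eqN: "{z \<in> space P. \<not> (gE z = RN_deriv (restr P E) (restr Q' E) z)} = ?N" using PR sP by simp
    show ?thesis by (rule AE_iff_measurable[OF NP eqN, THEN iffD2, OF N0])
  qed
  have ae3: "AE z in P. gE z = RN_deriv P Q' z"
    unfolding Q'_def by (rule P.RN_deriv_unique[OF gEm refl])
  have ac: "absolutely_continuous P Q'" unfolding Q'_def by (rule absolutely_continuousI_density[OF gEm])
  have ae: "AE z in P. RN_deriv (restr P E) (restr Q' E) z = RN_deriv P Q' z"
    using ae2 ae3 by eventually_elim (rule trans[OF sym], assumption+)
  have D5: "D (restr Q' E) (restr P E) = D Q' P"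
    by (rule D_inst(4)[OF D Ssig Pp Q'p Esub' Esub ac ae])
  have "D Q' P = D (restr Q E) (restr P E)" using D5 restr_eq by simp
  also have "\<dots> \<le> D Q P" by (rule D4)
  also have "\<dots> \<le> ennreal \<eta>" by (rule DQ)
  finally have Q'a: "Q' \<in> amb a b D P \<eta>"
    unfolding amb_def using Q'p by simp
  have ium: "(\<lambda>v. indicator S v * u v) \<in> borel_measurable (Bor a b)" if "S \<in> sets (Bor a b)" for S
    using that um by measurable
  have iub: "\<bar>indicator S v * u v\<bar> \<le> C" if "v \<in> {a..b}" for S v
    using ub[OF that] by (auto simp: indicator_def)
  have umP: "u \<in> borel_measurable P" using meas_Q[OF Pp um] .
  have "(\<integral>v. u v \<partial>Q') = (\<integral>v. g v *\<^sub>R u v \<partial>P)"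
    unfolding Q'_def gE_g by (rule integral_density[OF umP gm]) (use cpos in \<open>auto simp: g_def\<close>)
  also have "\<dots> = (\<integral>v. cW * (indicator W v * u v) + cL * (indicator L v * u v) \<partial>P)"
    by (rule Bochner_Integration.integral_cong) (simp_all add: g_def L_def sP indicator_def)
  also have "\<dots> = cW * (\<integral>v. indicator W v * u v \<partial>P) + cL * (\<integral>v. indicator L v * u v \<partial>P)"
    using int_Q[OF Pp ium[OF W] iub] int_Q[OF Pp ium[OF LP(1)[unfolded sP]] iub] by simp
  also have "\<dots> = measure Q W * ((\<integral>v. indicator W v * u v \<partial>P) / measure P W) +
      measure Q L * ((\<integral>v. indicator L v * u v \<partial>P) / measure P L)"
    by (simp add: cW_def cL_def)
  finally show ?thesis using Q'a unfolding L_def by blast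
qed

lemma ind_meas:
  assumes "S \<in> sets (Bor a b)" "f \<in> borel_measurable (Bor a b)"
  shows "(\<lambda>v. indicator S v * f v :: real) \<in> borel_measurable (Bor a b)"
  using assms by measurable

lemma ind_bd:
  assumes "\<And>v. v \<in> {a..b} \<Longrightarrow> \<bar>f v\<bar> \<le> C"
  shows "\<And>v. v \<in> {a..b} \<Longrightarrow> \<bar>indicator S v * f v :: real\<bar> \<le> C"
proof -
  fix v assume v: "v \<in> {a..b}"
  show "\<bar>indicator S v * f v :: real\<bar> \<le> C"
    using assms[OF v] abs_ge_zero[of "f v"] by (auto simp: indicator_def)
qed

lemma ind_int_const:
  assumes Pp: "prob_on {a..b} (sets (Bor a b)) P" and S: "S \<in> sets (Bor a b)"
  shows "(\<integral>v. indicator S v * c \<partial>P) = c * measure P S"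
proof -
  have sP: "space P = {a..b}" "sets P = sets (Bor a b)" using prob_onD[OF Pp] by auto
  have Ssub: "S \<subseteq> {a..b}" using sets.sets_into_space[OF S] by simp
  have "(\<integral>v. indicator S v * c \<partial>P) = (\<integral>v. indicator S v \<partial>P) * c" by simp
  also have "\<dots> = measure P (S \<inter> space P) * c" by simp
  also have "S \<inter> space P = S" using Ssub sP by auto
  finally show ?thesis by simp
qed

lemma Tavg:
  fixes u :: "real \<Rightarrow> real"
  assumes Pp: "prob_on {a..b} (sets (Bor a b)) P"
    and W: "W \<in> sets (Bor a b)" and pW: "0 < measure P W" "measure P W < 1"
    and um: "u \<in> borel_measurable (Bor a b)" and ub: "\<And>v. v \<in> {a..b} \<Longrightarrow> \<bar>u v\<bar> \<le> C"
    and ae: "AE l in P. l \<noteq> th"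
    and hyp: "\<And>v l. v \<in> W \<Longrightarrow> l \<in> {a..b} - W \<Longrightarrow> l \<noteq> th \<Longrightarrow> \<alpha> * (th - u v) + \<beta> * u l \<le> K"
  shows "\<alpha> * (th - (\<integral>v. indicator W v * u v \<partial>P) / measure P W)
         + \<beta> * ((\<integral>v. indicator ({a..b} - W) v * u v \<partial>P) / measure P ({a..b} - W)) \<le> K"
proof -
  define L where "L = {a..b} - W"
  interpret P: prob_space P using prob_onD[OF Pp] by simp
  have sP: "sets P = sets (Bor a b)" "space P = {a..b}" using prob_onD[OF Pp] by auto
  have L: "L \<in> sets (Bor a b)" unfolding L_def using W sets.compl_sets[of W "Bor a b"] by simp
  have pL: "measure P L = 1 - measure P W" unfolding L_def using P.prob_compl[of W] W sP by simp
  define pw where "pw = measure P W"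
  define pl where "pl = measure P L"
  define IW where "IW = (\<integral>v. indicator W v * u v \<partial>P)"
  define IL where "IL = (\<integral>v. indicator L v * u v \<partial>P)"
  have pwpos: "pw > 0" "pl > 0" using pW pL by (auto simp: pw_def pl_def)
  have iW: "integrable P (\<lambda>v. indicator W v * u v)" by (rule int_Q[OF Pp ind_meas[OF W um] ind_bd[where f=u and a=a and b=b, OF ub]])
  have iL: "integrable P (\<lambda>v. indicator L v * u v)" by (rule int_Q[OF Pp ind_meas[OF L um] ind_bd[where f=u and a=a and b=b, OF ub]])
  define s where "s = \<alpha> * th - \<alpha> * (IW / pw)"
  have step1: "\<beta> * u l \<le> K - s" if l: "l \<in> L" "l \<noteq> th" for l
  proof -
    have "(\<integral>v. (\<alpha> * th + \<beta> * u l) * indicator W v - \<alpha> * (indicator W v * u v) \<partial>P)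
        \<le> (\<integral>v. K * indicator W v \<partial>P)"
    proof (rule integral_mono)
      show "integrable P (\<lambda>v. (\<alpha> * th + \<beta> * u l) * indicator W v - \<alpha> * (indicator W v * u v))"
        using iW W sP by (intro Bochner_Integration.integrable_diff integrable_mult_right) (auto intro!: integrable_real_indicator simp: less_top[symmetric] P.emeasure_finite)
      show "integrable P (\<lambda>v. K * indicator W v)"
        using W sP by (intro integrable_mult_right) (auto intro!: integrable_real_indicator simp: less_top[symmetric] P.emeasure_finite)
      fix v assume "v \<in> space P"
      show "(\<alpha> * th + \<beta> * u l) * indicator W v - \<alpha> * (indicator W v * u v) \<le> K * indicator W v"
        using hyp[of v l] l by (cases "v \<in> W") (auto simp: L_def algebra_simps)
    qed
    also have "(\<integral>v. K * indicator W v \<partial>P) = K * pw"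
      using ind_int_const[OF Pp W, of K] by (simp add: pw_def mult.commute)
    also have "(\<integral>v. (\<alpha> * th + \<beta> * u l) * indicator W v - \<alpha> * (indicator W v * u v) \<partial>P)
        = (\<alpha> * th + \<beta> * u l) * pw - \<alpha> * IW"
    proof -
      have "(\<integral>v. (\<alpha> * th + \<beta> * u l) * indicator W v - \<alpha> * (indicator W v * u v) \<partial>P)
          = (\<integral>v. (\<alpha> * th + \<beta> * u l) * indicator W v \<partial>P) - (\<integral>v. \<alpha> * (indicator W v * u v) \<partial>P)"
        using iW W sP by (intro Bochner_Integration.integral_diff integrable_mult_right) (auto intro!: integrable_real_indicator simp: less_top[symmetric] P.emeasure_finite)
      also have "\<dots> = (\<alpha> * th + \<beta> * u l) * pw - \<alpha> * IW"
        using ind_int_const[OF Pp W, of "\<alpha> * th + \<beta> * u l"] by (simp add: pw_def IW_def mult.commute)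
      finally show ?thesis .
    qed
    finally have "(\<alpha> * th + \<beta> * u l) * pw - \<alpha> * IW \<le> K * pw" .
    then have "(\<alpha> * th + \<beta> * u l) - \<alpha> * (IW / pw) \<le> K"
      using pwpos by (simp add: field_simps)
    then show ?thesis unfolding s_def by simp
  qed
  have m1: "(\<integral>v. \<beta> * (indicator L v * u v) \<partial>P) \<le> (\<integral>v. indicator L v * (K - s) \<partial>P)"
  proof (rule integral_mono_AE)
    show "integrable P (\<lambda>v. \<beta> * (indicator L v * u v))" using iL by simp
    show "integrable P (\<lambda>v. indicator L v * (K - s))"
      using L sP by (intro integrable_mult_left) (auto intro!: integrable_real_indicator simp: less_top[symmetric] P.emeasure_finite)
    show "AE v in P. \<beta> * (indicator L v * u v) \<le> indicator L v * (K - s)"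
      using ae
    proof eventually_elim
      case (elim v)
      then show ?case using step1[of v] by (cases "v \<in> L") auto
    qed
  qed
  have m2: "(\<integral>v. indicator L v * (K - s) \<partial>P) = (K - s) * pl"
    unfolding pl_def by (rule ind_int_const[OF Pp L])
  have m3: "(\<integral>v. \<beta> * (indicator L v * u v) \<partial>P) = \<beta> * IL"
    unfolding IL_def by (rule integral_mult_right_zero)
  have "\<beta> * IL \<le> (K - s) * pl" using m1 unfolding m2 m3 .
  then have "\<beta> * (IL / pl) \<le> K - s" using pwpos by (simp add: field_simps)
  then show ?thesis unfolding s_def IW_def IL_def pw_def pl_def L_def by (simp add: algebra_simps)
qed

lemma telescope:
  fixes g X :: "real \<Rightarrow> real"
  assumes step: "\<And>s s'. a \<le> s \<Longrightarrow> s \<le> s' \<Longrightarrow> s' \<le> th \<Longrightarrow> g s' - g s \<ge> - ((s' - s) * (X s' - X s))"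
    and X01: "\<And>s. a \<le> s \<Longrightarrow> s \<le> th \<Longrightarrow> 0 \<le> X s \<and> X s \<le> 1"
    and ath: "a \<le> th" and ga: "g a \<ge> 0"
  shows "g th \<ge> 0"
proof (rule ccontr)
  assume neg: "\<not> g th \<ge> 0"
  have bound: "g th \<ge> - ((th - a) / real n)" if n: "n \<ge> 1" for n :: nat
  proof -
    define h where "h = (th - a) / real n"
    have h0: "h \<ge> 0" using ath n by (simp add: h_def)
    have claim: "k \<le> n \<Longrightarrow> g (a + real k * h) \<ge> g a - h * (X (a + real k * h) - X a)" for k
    proof (induction k)
      case 0
      then show ?case by simp
    next
      case (Suc k)
      let ?s = "a + real k * h" and ?s' = "a + real (Suc k) * h"
      have le: "real (Suc k) * h \<le> real n * h" using Suc.prems h0 by (intro mult_right_mono) auto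
      have nh: "real n * h = th - a" using n by (simp add: h_def)
      have s1: "a \<le> ?s" using h0 by simp
      have s2: "?s \<le> ?s'" using h0 by (simp add: algebra_simps)
      have s3: "?s' \<le> th" using le nh by simp
      have "g ?s' - g ?s \<ge> - ((?s' - ?s) * (X ?s' - X ?s))" by (rule step[OF s1 s2 s3])
      moreover have "?s' - ?s = h" by (simp add: algebra_simps)
      moreover have "g ?s \<ge> g a - h * (X ?s - X a)" using Suc by simp
      ultimately show ?case by (simp add: algebra_simps)
    qed
    have "a + real n * h = th" using n by (simp add: h_def)
    with claim[of n] have "g th \<ge> g a - h * (X th - X a)" by simp
    moreover have "h * (X th - X a) \<le> h * 1"
      using X01[of th] X01[of a] ath h0 by (intro mult_left_mono) auto
    ultimately show ?thesis using ga by (simp add: h_def)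
  qed
  have gneg: "- g th > 0" using neg by simp
  obtain n :: nat where n: "real n > (th - a) / (- g th)" using reals_Archimedean2 by blast
  have npos: "n \<ge> 1"
  proof -
    have "(th - a) / (- g th) \<ge> 0" using ath gneg by (intro divide_nonneg_pos) auto
    then have "real n > 0" using n by linarith
    then show ?thesis by simp
  qed
  have "(th - a) / real n < - g th" using n gneg npos by (simp add: field_simps)
  with bound[OF npos] show False by simp
qed

definition cst :: "real \<Rightarrow> real \<Rightarrow> real \<Rightarrow> real \<Rightarrow> real \<Rightarrow> real \<Rightarrow> real" where
  "cst \<alpha> \<beta> K xm v th = (if \<alpha> + (\<beta> - \<alpha>) * xm > 0
      then max 0 ((\<alpha> * th + (\<beta> - \<alpha>) * v - K) / (\<alpha> + (\<beta> - \<alpha>) * xm)) else 0)"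

lemma cst_props:
  assumes ab: "0 \<le> \<alpha>" "\<alpha> \<le> \<beta>" "\<beta> \<le> 1" and K: "K \<ge> 0" and xm: "0 \<le> xm" and v: "0 \<le> v" "v \<le> (th - a) * xm"
    and ath: "a \<le> th"
  shows "cst \<alpha> \<beta> K xm v th \<ge> 0"
    and "\<alpha> * th + (\<beta> - \<alpha>) * v - K - cst \<alpha> \<beta> K xm v th * (\<alpha> + (\<beta> - \<alpha>) * xm) \<le> 0"
    and "\<And>c. c \<ge> 0 \<Longrightarrow> \<alpha> * th + (\<beta> - \<alpha>) * v - K - c * (\<alpha> + (\<beta> - \<alpha>) * xm) \<le> 0 \<Longrightarrow> cst \<alpha> \<beta> K xm v th \<le> c"
    and "cst \<alpha> \<beta> K xm v th \<le> \<bar>th\<bar> + (th - a) + v / \<alpha>"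
proof -
  define Dn where "Dn = \<alpha> + (\<beta> - \<alpha>) * xm"
  define N where "N = \<alpha> * th + (\<beta> - \<alpha>) * v - K"
  have Dn0: "Dn \<ge> 0" using ab xm by (simp add: Dn_def)
  have cdef: "cst \<alpha> \<beta> K xm v th = (if Dn > 0 then max 0 (N / Dn) else 0)"
    by (simp add: cst_def Dn_def N_def)
  have N0: "N \<le> 0" if "Dn = 0"
  proof -
    have a0: "\<alpha> = 0" using that ab xm by (simp add: Dn_def) (smt (verit) mult_nonneg_nonneg)
    then have "\<beta> * xm = 0" using that by (simp add: Dn_def)
    then have "\<beta> = 0 \<or> xm = 0" by simp
    then show ?thesis
    proof
      assume "\<beta> = 0" then show ?thesis using a0 K by (simp add: N_def)
    next
      assume "xm = 0" then have "v = 0" using v by simp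
      then show ?thesis using a0 K by (simp add: N_def)
    qed
  qed
  show "cst \<alpha> \<beta> K xm v th \<ge> 0" unfolding cdef by simp
  show "\<alpha> * th + (\<beta> - \<alpha>) * v - K - cst \<alpha> \<beta> K xm v th * (\<alpha> + (\<beta> - \<alpha>) * xm) \<le> 0"
    unfolding cdef N_def[symmetric] Dn_def[symmetric]
  proof (cases "Dn > 0")
    case True
    have "N - N / Dn * Dn \<le> 0" using True by simp
    moreover have "N - 0 * Dn \<le> 0" if "N \<le> 0" using that by simp
    ultimately show "N - (if 0 < Dn then max 0 (N / Dn) else 0) * Dn \<le> 0" using True
      by (cases "N \<le> 0") (auto simp: max_def divide_le_0_iff)
  next
    case False
    then show "N - (if 0 < Dn then max 0 (N / Dn) else 0) * Dn \<le> 0" using N0 Dn0 by simp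
  qed
  show "cst \<alpha> \<beta> K xm v th \<le> c" if c: "c \<ge> 0" "\<alpha> * th + (\<beta> - \<alpha>) * v - K - c * (\<alpha> + (\<beta> - \<alpha>) * xm) \<le> 0" for c
    unfolding cdef
  proof (cases "Dn > 0")
    case True
    have "N \<le> c * Dn" using c(2) by (simp add: N_def Dn_def)
    then have "N / Dn \<le> c" using True by (simp add: divide_le_eq)
    then show "(if 0 < Dn then max 0 (N / Dn) else 0) \<le> c" using True c by simp
  next
    case False
    then show "(if 0 < Dn then max 0 (N / Dn) else 0) \<le> c" using c by simp
  qed
  show "cst \<alpha> \<beta> K xm v th \<le> \<bar>th\<bar> + (th - a) + v / \<alpha>"
    unfolding cdef
  proof (cases "Dn > 0")
    case True
    have rhs0: "0 \<le> \<bar>th\<bar> + (th - a) + v / \<alpha>" using ath v ab by simp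
    have "N / Dn \<le> \<bar>th\<bar> + (th - a) + v / \<alpha>"
    proof (cases "\<alpha> > 0")
      case apos: True
      have DnA: "Dn \<ge> \<alpha>" using ab xm by (simp add: Dn_def)
      have Nle: "N \<le> \<alpha> * \<bar>th\<bar> + v"
      proof -
        have "\<alpha> * th \<le> \<alpha> * \<bar>th\<bar>" using ab by (simp add: mult_left_mono)
        moreover have "(\<beta> - \<alpha>) * v \<le> 1 * v" using ab v by (intro mult_right_mono) auto
        ultimately show ?thesis using K by (simp add: N_def)
      qed
      show ?thesis
      proof (cases "N \<le> 0")
        case True
        then have "N / Dn \<le> 0" using Dn0 by (simp add: divide_le_0_iff)
        then show ?thesis using rhs0 by linarith
      next
        case False
        have "N / Dn \<le> N / \<alpha>" using False DnA apos by (intro divide_left_mono) auto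
        also have "\<dots> \<le> (\<alpha> * \<bar>th\<bar> + v) / \<alpha>" using Nle apos by (simp add: divide_right_mono)
        also have "\<dots> = \<bar>th\<bar> + v / \<alpha>" using apos by (simp add: field_simps)
        finally show ?thesis using ath by simp
      qed
    next
      case False
      then have a0: "\<alpha> = 0" using ab by simp
      then have Dnb: "Dn = \<beta> * xm" by (simp add: Dn_def)
      then have bx: "\<beta> > 0" "xm > 0" using True ab xm by (auto simp: zero_less_mult_iff)
      have "N \<le> \<beta> * v" using K a0 by (simp add: N_def)
      then have "N / (\<beta> * xm) \<le> (\<beta> * v) / (\<beta> * xm)"
        using bx by (intro divide_right_mono) auto
      then have "N / Dn \<le> (\<beta> * v) / (\<beta> * xm)" using Dnb by simp
      also have "\<dots> = v / xm" using bx by simp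
      also have "\<dots> \<le> th - a" using v bx by (simp add: divide_le_eq)
      finally show ?thesis using a0 by simp
    qed
    then show "(if 0 < Dn then max 0 (N / Dn) else 0) \<le> \<bar>th\<bar> + (th - a) + v / \<alpha>" using True rhs0 by simp
  next
    case False
    then show "(if 0 < Dn then max 0 (N / Dn) else 0) \<le> \<bar>th\<bar> + (th - a) + v / \<alpha>"
      using ath v ab by simp
  qed
qed

lemma final_alg:
  fixes V U' UP X Xm uW uL th \<alpha> \<beta> K c :: real
  assumes VU: "V \<le> U'" and UP: "UP = X * uW + (1 - X) * uL" and UU: "U' \<le> UP"
    and coarse: "uW \<ge> uL \<Longrightarrow> U' \<le> uL + (uW - uL) * Xm"
    and Tc: "\<alpha> * (th - uW) + \<beta> * uL \<le> K"
    and X: "0 \<le> Xm" "Xm \<le> X" "X \<le> 1" and ab: "0 \<le> \<alpha>" "\<alpha> \<le> \<beta>"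
    and c0: "c \<ge> 0"
    and cmin: "\<And>c'. c' \<ge> 0 \<Longrightarrow> \<alpha> * th + (\<beta> - \<alpha>) * V - K - c' * (\<alpha> + (\<beta> - \<alpha>) * Xm) \<le> 0 \<Longrightarrow> c \<le> c'"
  shows "V + c * (X - Xm) \<le> UP"
proof (cases "uW \<ge> uL")
  case True
  define cb where "cb = uW - uL"
  have cb0: "cb \<ge> 0" using True by (simp add: cb_def)
  have V1: "V - cb * Xm \<le> uL" using coarse[OF True] VU by (simp add: cb_def)
  have "(\<beta> - \<alpha>) * (V - cb * Xm) \<le> (\<beta> - \<alpha>) * uL" using V1 ab by (intro mult_left_mono) auto
  then have "\<alpha> * th + (\<beta> - \<alpha>) * V - K - cb * (\<alpha> + (\<beta> - \<alpha>) * Xm) \<le> 0"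
    using Tc by (simp add: cb_def algebra_simps)
  then have ccb: "c \<le> cb" by (rule cmin[OF cb0])
  have "c * (X - Xm) \<le> cb * (X - Xm)" using ccb X by (intro mult_right_mono) auto
  moreover have "V + cb * (X - Xm) \<le> UP" using V1 UP by (simp add: cb_def algebra_simps)
  ultimately show ?thesis by simp
next
  case False
  have "UP \<le> uL"
  proof -
    have "X * (uW - uL) \<le> 0" using False X by (simp add: mult_nonneg_nonpos)
    then show ?thesis using UP by (simp add: algebra_simps)
  qed
  then have VuL: "V \<le> uL" using VU UU by simp
  have "(\<beta> - \<alpha>) * V \<le> (\<beta> - \<alpha>) * uL" using VuL ab by (intro mult_left_mono) auto
  moreover have "\<alpha> * uW \<le> \<alpha> * uL" using False ab by (intro mult_left_mono) auto
  ultimately have "\<alpha> * th + (\<beta> - \<alpha>) * V - K - 0 * (\<alpha> + (\<beta> - \<alpha>) * Xm) \<le> 0"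
    using Tc by (simp add: algebra_simps)
  then have "c \<le> 0" using cmin[of 0] by simp
  then have "c = 0" using c0 by simp
  then show ?thesis using VU UU by simp
qed

lemma rule_aff_meas:
  assumes "bounded_measurable_rule a b x" "bounded_measurable_rule a b t" "i \<in> {1,2}" "h \<in> {a..b}"
  shows "(\<lambda>v. s * x i h v - t i h v) \<in> borel_measurable (Bor a b)"
  using sect_meas[OF assms(1,3,4)] sect_meas[OF assms(2,3,4)] by measurable

lemma env_feasible:
  assumes Pp: "prob_on {a..b} (sets (Bor a b)) P" and Pa: "P \<in> amb a b D P \<eta>"
    and al: "allocation_rule a b x" and tr: "transfer_rule a b t"
    and feas: "feasible a b D P \<eta> x t" and i: "i \<in> {1,2}" and th: "th \<in> {a..b}"
    and mono: "mono_on {a..b} (Xmin a b D P \<eta> x i)"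
  shows "integral {a..th} (Xmin a b D P \<eta> x i) \<le> Umin a b D P \<eta> x t i th"
proof -
  let ?Xm = "Xmin a b D P \<eta> x i"
  let ?U = "Umin a b D P \<eta> x t i"
  have xm: "bounded_measurable_rule a b x" using al by (simp add: allocation_rule_def)
  have tm: "bounded_measurable_rule a b t" using tr by (simp add: transfer_rule_def)
  obtain Ct where Ct: "\<And>u v. u \<in> {a..b} \<Longrightarrow> v \<in> {a..b} \<Longrightarrow> \<bar>t i u v\<bar> \<le> Ct"
    using sect_bound[OF tm i] by blast
  have gbd: "\<bar>s * x i h v - t i h v\<bar> \<le> \<bar>s\<bar> + Ct" if "h \<in> {a..b}" "v \<in> {a..b}" for s h v
  proof -
    have "\<bar>s * x i h v\<bar> \<le> \<bar>s\<bar>" using x_bounds[OF al i that] by (simp add: abs_mult mult_left_le)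
    then show ?thesis using Ct[OF that] by linarith
  qed
  have bdd: "bdd_below ((\<lambda>Q. \<integral>v. s * x i h v - t i h v \<partial>Q) ` amb a b D P \<eta>)" if h: "h \<in> {a..b}" for s h
  proof (rule bdd_belowI[where m="- (\<bar>s\<bar> + Ct)"], clarify)
    fix Q assume "Q \<in> amb a b D P \<eta>"
    then have Q: "prob_on {a..b} (sets (Bor a b)) Q" using amb_D by blast
    show "- (\<bar>s\<bar> + Ct) \<le> (\<integral>v. s * x i h v - t i h v \<partial>Q)"
    proof (rule int_Q_ge[OF Q rule_aff_meas[OF xm tm i h] gbd[OF h]])
      fix v assume "v \<in> {a..b}"
      from gbd[OF h this, of s] show "- (\<bar>s\<bar> + Ct) \<le> s * x i h v - t i h v" by linarith
    qed
  qed
  have bddX: "bdd_below ((\<lambda>Q. \<integral>v. x i h v \<partial>Q) ` amb a b D P \<eta>)" if h: "h \<in> {a..b}" for h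
    using Xint_bounds[OF al i h] by (intro bdd_belowI[where m=0]) auto
  have IC: "Urep a b D P \<eta> x t i s h \<le> Urep a b D P \<eta> x t i s s" if "s \<in> {a..b}" "h \<in> {a..b}" for s h
    using feas that i unfolding feasible_def incentive_compatible_def by blast
  have inc: "?U h + (s - h) * ?Xm h \<le> ?U s" if hs: "a \<le> h" "h \<le> s" "s \<le> b" for h s
  proof -
    have h: "h \<in> {a..b}" and s: "s \<in> {a..b}" using hs by auto
    have "?U h + (s - h) * ?Xm h \<le> Urep a b D P \<eta> x t i s h" unfolding Urep_def
    proof (rule cINF_greatest)
      show "amb a b D P \<eta> \<noteq> {}" using Pa by auto
      fix Q assume Qa: "Q \<in> amb a b D P \<eta>"
      then have Q: "prob_on {a..b} (sets (Bor a b)) Q" using amb_D by blast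
      have xbd: "\<And>v. v \<in> {a..b} \<Longrightarrow> \<bar>x i h v\<bar> \<le> 1" using x_bounds[OF al i h] by fastforce
      have i1: "integrable Q (\<lambda>v. h * x i h v - t i h v)"
        by (rule int_Q[OF Q rule_aff_meas[OF xm tm i h] gbd[OF h]])
      have i2: "integrable Q (x i h)" by (rule int_Q[OF Q sect_meas[OF xm i h] xbd])
      have "(\<integral>v. s * x i h v - t i h v \<partial>Q) = (\<integral>v. (h * x i h v - t i h v) + (s - h) * x i h v \<partial>Q)"
        by (simp add: algebra_simps)
      also have "\<dots> = (\<integral>v. h * x i h v - t i h v \<partial>Q) + (s - h) * (\<integral>v. x i h v \<partial>Q)"
        using i1 i2 by simp
      finally have eq: "(\<integral>v. s * x i h v - t i h v \<partial>Q) = (\<integral>v. h * x i h v - t i h v \<partial>Q) + (s - h) * (\<integral>v. x i h v \<partial>Q)" .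
      have "?U h \<le> (\<integral>v. h * x i h v - t i h v \<partial>Q)"
        unfolding Umin_def by (rule cINF_lower[OF bdd[OF h] Qa])
      moreover have "?Xm h \<le> (\<integral>v. x i h v \<partial>Q)"
        unfolding Xmin_def by (rule cINF_lower[OF bddX[OF h] Qa])
      then have "(s - h) * ?Xm h \<le> (s - h) * (\<integral>v. x i h v \<partial>Q)" using hs by (intro mult_left_mono) auto
      ultimately show "?U h + (s - h) * ?Xm h \<le> (\<integral>v. s * x i h v - t i h v \<partial>Q)" unfolding eq by linarith
    qed
    also have "\<dots> \<le> Urep a b D P \<eta> x t i s s" by (rule IC[OF s h])
    also have "\<dots> = ?U s" by (rule Urep_Umin)
    finally show ?thesis .
  qed
  define g where "g = (\<lambda>s. ?U s - integral {a..s} ?Xm)"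
  have step: "g s' - g s \<ge> - ((s' - s) * (?Xm s' - ?Xm s))" if ss: "a \<le> s" "s \<le> s'" "s' \<le> th" for s s'
  proof -
    have sb: "s' \<le> b" using ss th by auto
    have "?U s + (s' - s) * ?Xm s \<le> ?U s'" by (rule inc) (use ss sb in auto)
    moreover have "integral {a..s'} ?Xm = integral {a..s} ?Xm + integral {s..s'} ?Xm"
      "integral {s..s'} ?Xm \<le> (s' - s) * ?Xm s'" using mono_int[OF mono ss(1,2) sb] by auto
    ultimately show ?thesis unfolding g_def by (simp add: algebra_simps)
  qed
  have X01: "0 \<le> ?Xm s \<and> ?Xm s \<le> 1" if "a \<le> s" "s \<le> th" for s
  proof -
    have s: "s \<in> {a..b}" using that th by auto
    show ?thesis using Xmin_bounds[OF al i s Pa] by auto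
  qed
  have ath: "a \<le> th" using th by simp
  have "?U a \<ge> 0" using feas i th unfolding feasible_def individually_rational_def by auto
  then have ga: "g a \<ge> 0" by (simp add: g_def)
  have "g th \<ge> 0" by (rule telescope[OF step X01 ath ga])
  then show ?thesis by (simp add: g_def)
qed

lemma atomless_single:
  assumes atl: "atomless P" and Pp: "prob_on {a..b} (sets (Bor a b)) P" and th: "th \<in> {a..b}"
  shows "emeasure P {th} = 0"
proof (rule ccontr)
  assume ne: "emeasure P {th} \<noteq> 0"
  have sP: "sets P = sets (Bor a b)" using prob_onD[OF Pp] by simp
  have S: "{th} \<in> sets P" unfolding sP Bor_def using th
    by (simp add: sets_restrict_space_iff)
  have "\<forall>B\<in>sets P. B \<subseteq> {th} \<longrightarrow> emeasure P B = 0 \<or> emeasure P B = emeasure P {th}"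
  proof (intro ballI impI)
    fix B assume "B \<in> sets P" "B \<subseteq> {th}"
    then have "B = {} \<or> B = {th}" by blast
    then show "emeasure P B = 0 \<or> emeasure P B = emeasure P {th}" by auto
  qed
  then show False using atl S ne unfolding atomless_def by (auto simp: zero_less_iff_neq_zero)
qed

lemma amb_single:
  assumes D: "assumption_D a b D" and Pp: "prob_on {a..b} (sets (Bor a b)) P"
    and Qa: "Q \<in> amb a b D P \<eta>" and P0: "emeasure P {th} = 0" and th: "th \<in> {a..b}"
  shows "AE v in Q. v \<noteq> th"
proof -
  have Qp: "prob_on {a..b} (sets (Bor a b)) Q" and DQ: "D Q P \<le> ennreal \<eta>" using amb_D[OF Qa] by auto
  have Ssig: "subsigma {a..b} (sets (Bor a b))"
    using sets.sigma_algebra_axioms[of "Bor a b"] by (simp add: subsigma_def Bor_def)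
  have "D Q P < \<infinity>" using DQ by (simp add: le_less_trans)
  then have ac: "absolutely_continuous P Q" by (rule D_inst(2)[OF D Ssig Pp Qp])
  have S: "{th} \<in> sets P" using prob_onD(3)[OF Pp] th by (simp add: Bor_def sets_restrict_space_iff)
  have "{th} \<in> null_sets P" using S P0 by (simp add: null_sets_def)
  then have "{th} \<in> null_sets Q" using ac unfolding absolutely_continuous_def by blast
  then have "AE v in Q. v \<notin> {th}" by (rule AE_not_in)
  then show ?thesis by simp
qed

lemma pointwise:
  assumes D: "assumption_D a b D" and Pp: "prob_on {a..b} (sets (Bor a b)) P" and eta: "\<eta> > 0"
    and atl: "atomless P" and al: "allocation_rule a b x" and AX: "assumption_X a b D P \<eta> x"
    and tr: "transfer_rule a b t" and feas: "feasible a b D P \<eta> x t" and Tc: "Tclass a b \<alpha> \<beta> K x t"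
    and ab: "0 \<le> \<alpha>" "\<alpha> \<le> \<beta>" "\<beta> \<le> 1" "K \<ge> 0"
    and i: "i \<in> {1,2}" and th: "th \<in> {a..b}" and thb: "th < b"
  shows "Texp P t i th \<le> th * Xexp P x i th - integral {a..th} (Xmin a b D P \<eta> x i)
     - cst \<alpha> \<beta> K (Xmin a b D P \<eta> x i th) (integral {a..th} (Xmin a b D P \<eta> x i)) th
       * (Xexp P x i th - Xmin a b D P \<eta> x i th)"
proof -
  define Xm where "Xm = Xmin a b D P \<eta> x i"
  define V where "V = integral {a..th} Xm"
  define X where "X = Xexp P x i th"
  define c where "c = cst \<alpha> \<beta> K (Xm th) V th"
  interpret P: prob_space P using prob_onD[OF Pp] by simp
  have sP: "sets P = sets (Bor a b)" "space P = {a..b}" using prob_onD[OF Pp] by auto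
  have Pa: "P \<in> amb a b D P \<eta>" using P_amb[OF D Pp] eta by simp
  have xm: "bounded_measurable_rule a b x" using al by (simp add: allocation_rule_def)
  have tm: "bounded_measurable_rule a b t" using tr by (simp add: transfer_rule_def)
  obtain Ct where Ct: "\<And>u v. u \<in> {a..b} \<Longrightarrow> v \<in> {a..b} \<Longrightarrow> \<bar>t i u v\<bar> \<le> Ct"
    using sect_bound[OF tm i] by blast
  have mono: "mono_on {a..b} Xm" using AX i unfolding assumption_X_def Xm_def by blast
  have bin: "\<And>v. v \<in> {a..b} \<Longrightarrow> v \<noteq> th \<Longrightarrow> x i th v \<in> {0,1}"
    using AX i th unfolding assumption_X_def by blast
  have X1: "X = 1 \<Longrightarrow> th = b" using AX i th unfolding assumption_X_def X_def by blast
  define W where "W = {v \<in> space (Bor a b). x i th v = 1}"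
  have Wm: "W \<in> sets (Bor a b)" unfolding W_def
    by (rule borel_measurable_eq[OF sect_meas[OF xm i th] borel_measurable_const])
  have Wsub: "W \<subseteq> {a..b}" by (auto simp: W_def)
  have xW: "x i th v = indicator W v" if "v \<in> {a..b}" "v \<noteq> th" for v
    using bin[OF that] that by (auto simp: W_def indicator_def)
  have P0: "emeasure P {th} = 0" by (rule atomless_single[OF atl Pp th])
  have intQ: "(\<integral>v. x i th v \<partial>Q) = measure Q W" if Qa: "Q \<in> amb a b D P \<eta>" for Q
  proof -
    have Q: "prob_on {a..b} (sets (Bor a b)) Q" using amb_D[OF Qa] by blast
    have sQ: "sets Q = sets (Bor a b)" "space Q = {a..b}" using prob_onD[OF Q] by auto
    have "(\<integral>v. x i th v \<partial>Q) = (\<integral>v. indicator W v \<partial>Q)"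
    proof (rule integral_cong_AE)
      show "x i th \<in> borel_measurable Q" by (rule meas_Q[OF Q sect_meas[OF xm i th]])
      show "(indicator W :: real \<Rightarrow> real) \<in> borel_measurable Q" using Wm sQ by simp
      show "AE v in Q. x i th v = indicator W v"
        using amb_single[OF D Pp Qa P0 th] 
      proof (rule AE_mp[OF _ AE_I2])
        fix v assume "v \<in> space Q" then show "v \<noteq> th \<longrightarrow> x i th v = indicator W v"
          using xW sQ by auto
      qed
    qed
    also have "\<dots> = measure Q (W \<inter> space Q)" by simp
    also have "W \<inter> space Q = W" using Wsub sQ by auto
    finally show ?thesis .
  qed
  have XmW: "Xm th = (INF Q\<in>amb a b D P \<eta>. measure Q W)"
    unfolding Xm_def Xmin_def using intQ by (intro INF_cong) auto
  have XW: "X = measure P W" unfolding X_def Xexp_def using intQ[OF Pa] .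
  define u where "u = (\<lambda>v. th * x i th v - t i th v)"
  have um: "u \<in> borel_measurable (Bor a b)" unfolding u_def by (rule rule_aff_meas[OF xm tm i th])
  have ub: "\<bar>u v\<bar> \<le> \<bar>th\<bar> + Ct" if "v \<in> {a..b}" for v
  proof -
    have "\<bar>th * x i th v\<bar> \<le> \<bar>th\<bar>" using x_bounds[OF al i th that] by (simp add: abs_mult mult_left_le)
    then show ?thesis using Ct[OF th that] unfolding u_def by linarith
  qed
  have bddU: "bdd_below ((\<lambda>Q. \<integral>v. u v \<partial>Q) ` amb a b D P \<eta>)"
  proof (rule bdd_belowI[where m="- (\<bar>th\<bar> + Ct)"], clarify)
    fix Q assume "Q \<in> amb a b D P \<eta>"
    then have Q: "prob_on {a..b} (sets (Bor a b)) Q" using amb_D by blast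
    show "- (\<bar>th\<bar> + Ct) \<le> (\<integral>v. u v \<partial>Q)"
    proof (rule int_Q_ge[OF Q um ub])
      fix v assume "v \<in> {a..b}" from ub[OF this] show "- (\<bar>th\<bar> + Ct) \<le> u v" by linarith
    qed
  qed
  define U' where "U' = (INF Q\<in>amb a b D P \<eta>. \<integral>v. u v \<partial>Q)"
  have U'def: "Umin a b D P \<eta> x t i th = U'" unfolding Umin_def U'_def u_def by simp
  have VU: "V \<le> U'" unfolding V_def Xm_def U'def[symmetric]
    by (rule env_feasible[OF Pp Pa al tr feas i th mono[unfolded Xm_def]])
  define UP where "UP = (\<integral>v. u v \<partial>P)"
  have UU: "U' \<le> UP" unfolding U'_def UP_def by (rule cINF_lower[OF bddU Pa])
  have xbd: "\<And>v. v \<in> {a..b} \<Longrightarrow> \<bar>x i th v\<bar> \<le> 1" using x_bounds[OF al i th] by fastforce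
  have ix: "integrable P (x i th)" by (rule int_Q[OF Pp sect_meas[OF xm i th] xbd])
  have iu: "integrable P u" by (rule int_Q[OF Pp um ub])
  have TX: "Texp P t i th = th * X - UP"
  proof -
    have "Texp P t i th = (\<integral>v. th * x i th v - u v \<partial>P)" unfolding Texp_def u_def by simp
    also have "\<dots> = th * X - UP" using ix iu by (simp add: X_def Xexp_def UP_def)
    finally show ?thesis .
  qed
  have Xmb: "0 \<le> Xm th" "Xm th \<le> X" "X \<le> 1" using Xmin_bounds[OF al i th Pa] by (auto simp: Xm_def X_def)
  have V0: "0 \<le> V" unfolding V_def
    by (rule V_nonneg[OF mono _ th]) (use Xmin_bounds(1)[OF al i _ Pa] in \<open>auto simp: Xm_def\<close>)
  have Vle: "V \<le> (th - a) * Xm th" unfolding V_def using mono_int(3)[OF mono order_refl, of th] th by simp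
  have ath: "a \<le> th" using th by simp
  note cp = cst_props[OF ab Xmb(1) V0 Vle ath]
  have c0: "c \<ge> 0" using cp(1) by (simp add: c_def)
  have cmin: "\<And>c'. c' \<ge> 0 \<Longrightarrow> \<alpha> * th + (\<beta> - \<alpha>) * V - K - c' * (\<alpha> + (\<beta> - \<alpha>) * Xm th) \<le> 0 \<Longrightarrow> c \<le> c'"
    using cp(3) by (simp add: c_def)
  have goal: "V + c * (X - Xm th) \<le> UP"
  proof -
    have pW0: "measure P W \<ge> 0" by simp
    have pW1: "measure P W \<le> 1" by simp
    consider "measure P W = 0" | "measure P W = 1" | "0 < measure P W \<and> measure P W < 1"
      using pW0 pW1 by linarith
    then show ?thesis
    proof cases
      case 1
      then have "X = 0" "Xm th = 0" using XW Xmb by auto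
      then show ?thesis using VU UU by simp
    next
      case 2
      then show ?thesis using X1 XW thb by simp
    next
      case 3
      define L where "L = {a..b} - W"
      have Lm: "L \<in> sets (Bor a b)" unfolding L_def using Wm sets.compl_sets[of W "Bor a b"] by simp
      define uW where "uW = (\<integral>v. indicator W v * u v \<partial>P) / measure P W"
      define uL where "uL = (\<integral>v. indicator L v * u v \<partial>P) / measure P L"
      have pL: "measure P L = 1 - measure P W" unfolding L_def using P.prob_compl[of W] Wm sP by simp
      have UPs: "UP = X * uW + (1 - X) * uL"
      proof -
        have iW: "integrable P (\<lambda>v. indicator W v * u v)" by (rule int_Q[OF Pp ind_meas[OF Wm um] ind_bd[where f=u and a=a and b=b, OF ub]])
        have iL: "integrable P (\<lambda>v. indicator L v * u v)" by (rule int_Q[OF Pp ind_meas[OF Lm um] ind_bd[where f=u and a=a and b=b, OF ub]])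
        have "UP = (\<integral>v. indicator W v * u v + indicator L v * u v \<partial>P)"
          unfolding UP_def by (rule Bochner_Integration.integral_cong) (auto simp: sP L_def indicator_def)
        also have "\<dots> = (\<integral>v. indicator W v * u v \<partial>P) + (\<integral>v. indicator L v * u v \<partial>P)"
          using iW iL by simp
        also have "\<dots> = X * uW + (1 - X) * uL" using 3 pL XW by (simp add: uW_def uL_def)
        finally show ?thesis .
      qed
      have Tcl: "\<alpha> * (th - uW) + \<beta> * uL \<le> K"
        unfolding uW_def uL_def L_def
      proof (rule Tavg[OF Pp Wm _ _ um ub])
        show "0 < measure P W" "measure P W < 1" using 3 by auto
        show "AE l in P. l \<noteq> th" using amb_single[OF D Pp Pa P0 th] .
        fix v l assume v: "v \<in> W" and l: "l \<in> {a..b} - W" "l \<noteq> th"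
        have v': "v \<in> {a..b}" "x i th v = 1" using v by (auto simp: W_def)
        have l': "l \<in> {a..b}" "x i th l = 0" using l bin[of l] by (auto simp: W_def)
        have "\<alpha> * t i th v - \<beta> * t i th l \<le> K"
          using Tc i th thb v' l' unfolding Tclass_def by blast
        then show "\<alpha> * (th - u v) + \<beta> * u l \<le> K" using v' l' by (simp add: u_def)
      qed
      have coarse: "U' \<le> uL + (uW - uL) * Xm th" if ge: "uW \<ge> uL"
      proof -
        have "U' \<le> (uW - uL) * measure Q W - (- uL)" if Qa: "Q \<in> amb a b D P \<eta>" for Q
        proof -
          have Qp: "prob_on {a..b} (sets (Bor a b)) Q" using amb_D[OF Qa] by blast
          interpret Q: prob_space Q using prob_onD[OF Qp] by simp
          have qL: "measure Q L = 1 - measure Q W" unfolding L_def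
            using Q.prob_compl[of W] Wm prob_onD[OF Qp] by simp
          obtain Q' where Q'a: "Q' \<in> amb a b D P \<eta>" and Q'eq: "(\<integral>v. u v \<partial>Q') = measure Q W * uW + measure Q L * uL"
            using coarsen[OF D Pp Qa Wm _ _ um ub] 3 unfolding uW_def uL_def L_def by blast
          have "U' \<le> (\<integral>v. u v \<partial>Q')" unfolding U'_def by (rule cINF_lower[OF bddU Q'a])
          also have "\<dots> = (uW - uL) * measure Q W - (- uL)" unfolding Q'eq qL by (simp add: algebra_simps)
          finally show ?thesis .
        qed
        then have "U' \<le> (INF Q\<in>amb a b D P \<eta>. (uW - uL) * measure Q W - (- uL))"
          using Pa by (intro cINF_greatest) auto
        also have "\<dots> \<le> (uW - uL) * (INF Q\<in>amb a b D P \<eta>. measure Q W) - (- uL)"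
          by (rule inf_aff_le[OF Pa, where lo=0 and hi=1]) (auto simp: amb_def prob_on_def prob_space.prob_le_1)
        also have "\<dots> = uL + (uW - uL) * Xm th" unfolding XmW by simp
        finally show ?thesis .
      qed
      show ?thesis
        by (rule final_alg[OF VU UPs UU coarse Tcl Xmb ab(1,2) c0 cmin])
    qed
  qed
  show ?thesis using goal TX unfolding c_def V_def Xm_def X_def by simp
qed

lemma Texp_int:
  assumes Pp: "prob_on {a..b} (sets (Bor a b)) P" and f: "bounded_measurable_rule a b f" and i: "i \<in> {1,2}"
  shows "integrable P (Texp P f i)"
proof -
  interpret P: prob_space P using prob_onD[OF Pp] by simp
  obtain C where C: "\<And>u v. u \<in> {a..b} \<Longrightarrow> v \<in> {a..b} \<Longrightarrow> \<bar>f i u v\<bar> \<le> C"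
    using sect_bound[OF f i] by blast
  have fm: "(\<lambda>(u, v). f i u v) \<in> borel_measurable (Bor a b \<Otimes>\<^sub>M Bor a b)"
    using f i unfolding bounded_measurable_rule_def by auto
  have "sets (Bor a b \<Otimes>\<^sub>M P) = sets (Bor a b \<Otimes>\<^sub>M Bor a b)"
    using prob_onD(3)[OF Pp] by (intro sets_pair_measure_cong) auto
  then have fm': "(\<lambda>(u, v). f i u v) \<in> borel_measurable (Bor a b \<Otimes>\<^sub>M P)"
    using fm measurable_cong_sets by blast
  have m: "(\<lambda>u. \<integral>v. f i u v \<partial>P) \<in> borel_measurable (Bor a b)"
    by (rule P.borel_measurable_lebesgue_integral) (use fm' in simp)
  have bd: "\<bar>\<integral>v. f i u v \<partial>P\<bar> \<le> C" if u: "u \<in> {a..b}" for u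
  proof -
    have "- C \<le> (\<integral>v. f i u v \<partial>P)"
    proof (rule int_Q_ge[OF Pp sect_meas[OF f i u] C[OF u]])
      fix v assume "v \<in> {a..b}" from C[OF u this] show "- C \<le> f i u v" by linarith
    qed
    moreover have "(\<integral>v. f i u v \<partial>P) \<le> C"
    proof (rule int_Q_le[OF Pp sect_meas[OF f i u] C[OF u]])
      fix v assume "v \<in> {a..b}" from C[OF u this] show "f i u v \<le> C" by linarith
    qed
    ultimately show ?thesis by linarith
  qed
  have "integrable P (\<lambda>u. \<integral>v. f i u v \<partial>P)" by (rule int_Q[OF Pp m bd])
  moreover have "Texp P f i = (\<lambda>u. \<integral>v. f i u v \<partial>P)" by (rule ext) (simp add: Texp_def)
  ultimately show ?thesis by simp
qed

lemma partB:
  assumes D: "assumption_D a b D" and Pp: "prob_on {a..b} (sets (Bor a b)) P" and eta: "\<eta> > 0"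
    and atl: "atomless P" and al: "allocation_rule a b x" and AX: "assumption_X a b D P \<eta> x"
    and ab: "0 \<le> \<alpha>" "\<alpha> \<le> \<beta>" "\<beta> \<le> 1" "K \<ge> 0"
    and sol: "solves P (constraints_R a b D P \<eta> \<alpha> \<beta> K x) t"
    and t': "constraints_P a b D P \<eta> \<alpha> \<beta> K x t'"
  shows "revenue P t' \<le> revenue P t"
proof -
  interpret P: prob_space P using prob_onD[OF Pp] by simp
  have sP: "sets P = sets (Bor a b)" "space P = {a..b}" using prob_onD[OF Pp] by auto
  have Pa: "P \<in> amb a b D P \<eta>" using P_amb[OF D Pp] eta by simp
  have xm: "bounded_measurable_rule a b x" using al by (simp add: allocation_rule_def)
  define Xm where "Xm = (\<lambda>i. Xmin a b D P \<eta> x i)"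
  define V where "V = (\<lambda>i th. integral {a..th} (Xm i))"
  define cs where "cs = (\<lambda>i th. cst \<alpha> \<beta> K (Xm i th) (V i th) th)"
  define tL where "tL = (\<lambda>i th. cs i th * Xm i th - V i th)"
  define tW where "tW = (\<lambda>i th. th - cs i th + tL i th)"
  define t2 where "t2 = (\<lambda>i th v. tW i th * x i th v + tL i th * (1 - x i th v))"
  have mono: "\<And>i. i \<in> {1,2} \<Longrightarrow> mono_on {a..b} (Xm i)"
    using AX unfolding assumption_X_def Xm_def by blast
  have Xb: "0 \<le> Xm i th" "Xm i th \<le> 1" "Xm i th \<le> Xexp P x i th" if "i \<in> {1,2}" "th \<in> {a..b}" for i th
    using Xmin_bounds[OF al that Pa] by (auto simp: Xm_def)
  have Vb: "0 \<le> V i th" "V i th \<le> (th - a) * Xm i th" if i: "i \<in> {1,2}" and th: "th \<in> {a..b}" for i th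
  proof -
    show "0 \<le> V i th" unfolding V_def
      by (rule V_nonneg[OF mono[OF i] _ th]) (use Xb(1)[OF i] in auto)
    show "V i th \<le> (th - a) * Xm i th" unfolding V_def
      using mono_int(3)[OF mono[OF i] order_refl, of th] th by simp
  qed
  have Vb2: "V i th \<le> b - a" if i: "i \<in> {1,2}" and th: "th \<in> {a..b}" for i th
  proof -
    have "(th - a) * Xm i th \<le> (b - a) * 1" using Xb[OF i th] th by (intro mult_mono) auto
    then show ?thesis using Vb(2)[OF i th] by simp
  qed
  have csb: "0 \<le> cs i th" "cs i th \<le> \<bar>a\<bar> + \<bar>b\<bar> + (b - a) + (b - a) / \<alpha>"
    "\<alpha> * th + (\<beta> - \<alpha>) * V i th - K - cs i th * (\<alpha> + (\<beta> - \<alpha>) * Xm i th) \<le> 0"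
    if i: "i \<in> {1,2}" and th: "th \<in> {a..b}" for i th
  proof -
    have ath: "a \<le> th" using th by simp
    note cp = cst_props[OF ab Xb(1)[OF i th] Vb[OF i th] ath]
    show "0 \<le> cs i th" using cp(1) by (simp add: cs_def)
    show "\<alpha> * th + (\<beta> - \<alpha>) * V i th - K - cs i th * (\<alpha> + (\<beta> - \<alpha>) * Xm i th) \<le> 0"
      using cp(2) by (simp add: cs_def)
    have "V i th / \<alpha> \<le> (b - a) / \<alpha>" using Vb2[OF i th] ab by (intro divide_right_mono) auto
    moreover have "\<bar>th\<bar> \<le> \<bar>a\<bar> + \<bar>b\<bar>" using th ath by (auto simp: abs_le_iff)
    ultimately show "cs i th \<le> \<bar>a\<bar> + \<bar>b\<bar> + (b - a) + (b - a) / \<alpha>" using cp(4) th by (simp add: cs_def)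
  qed
  define B where "B = \<bar>a\<bar> + \<bar>b\<bar> + (b - a) + (b - a) / \<alpha>"
  have tLb: "\<bar>tL i th\<bar> \<le> B + (b - a)" if i: "i \<in> {1,2}" and th: "th \<in> {a..b}" for i th
  proof -
    have "cs i th * Xm i th \<le> cs i th * 1" using csb(1)[OF i th] Xb[OF i th] by (intro mult_left_mono) auto
    moreover have "0 \<le> cs i th * Xm i th" using csb(1)[OF i th] Xb[OF i th] by simp
    ultimately show ?thesis using csb(2)[OF i th] Vb[OF i th] Vb2[OF i th] by (simp add: tL_def B_def abs_le_iff)
  qed
  have tWb: "\<bar>tW i th\<bar> \<le> \<bar>a\<bar> + \<bar>b\<bar> + B + (B + (b - a))" if i: "i \<in> {1,2}" and th: "th \<in> {a..b}" for i th
  proof -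
    have "\<bar>th\<bar> \<le> \<bar>a\<bar> + \<bar>b\<bar>" using th by (auto simp: abs_le_iff)
    moreover have "cs i th \<le> B" using csb(2)[OF i th] by (simp add: B_def)
    ultimately show ?thesis using tLb[OF i th] csb(1)[OF i th] unfolding tW_def by (simp add: abs_le_iff)
  qed
  have Xmm: "Xm i \<in> borel_measurable (Bor a b)" if i: "i \<in> {1,2}" for i
    unfolding Bor_def by (rule borel_measurable_mono_on_fnc[OF mono[OF i]])
  have Vmono: "mono_on {a..b} (V i)" if i: "i \<in> {1,2}" for i
  proof (rule mono_onI)
    fix r s assume rs: "r \<in> {a..b}" "s \<in> {a..b}" "r \<le> s"
    have "V i s = V i r + integral {r..s} (Xm i)" "(s - r) * Xm i r \<le> integral {r..s} (Xm i)"
      using mono_int[OF mono[OF i], of r s] rs by (auto simp: V_def)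
    moreover have "0 \<le> (s - r) * Xm i r" using rs Xb(1)[OF i, of r] by simp
    ultimately show "V i r \<le> V i s" by simp
  qed
  have Vm: "V i \<in> borel_measurable (Bor a b)" if i: "i \<in> {1,2}" for i
    unfolding Bor_def by (rule borel_measurable_mono_on_fnc[OF Vmono[OF i]])
  have csm: "cs i \<in> borel_measurable (Bor a b)" if i: "i \<in> {1,2}" for i
  proof -
    note [measurable] = Xmm[OF i, unfolded Bor_def] Vm[OF i, unfolded Bor_def]
    have id: "(\<lambda>x::real. x) \<in> borel_measurable (restrict_space borel {a..b})"
      by (rule measurable_restrict_space1) simp
    note [measurable] = id
    show ?thesis unfolding cs_def cst_def Bor_def by measurable
  qed
  have tLm: "tL i \<in> borel_measurable (Bor a b)" if i: "i \<in> {1,2}" for i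
  proof -
    note [measurable] = Xmm[OF i, unfolded Bor_def] Vm[OF i, unfolded Bor_def] csm[OF i, unfolded Bor_def]
    show ?thesis unfolding tL_def Bor_def by measurable
  qed
  have tWm: "tW i \<in> borel_measurable (Bor a b)" if i: "i \<in> {1,2}" for i
  proof -
    note [measurable] = tLm[OF i, unfolded Bor_def] csm[OF i, unfolded Bor_def]
    have id: "(\<lambda>x::real. x) \<in> borel_measurable (restrict_space borel {a..b})"
      by (rule measurable_restrict_space1) simp
    note [measurable] = id
    show ?thesis unfolding tW_def Bor_def by measurable
  qed
  have t2m: "bounded_measurable_rule a b t2" unfolding bounded_measurable_rule_def
  proof (intro ballI conjI)
    fix i :: nat assume i: "i \<in> {1,2}"
    have xp0: "(\<lambda>(u, v). x i u v) \<in> borel_measurable (Bor a b \<Otimes>\<^sub>M Bor a b)"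
      using xm i unfolding bounded_measurable_rule_def by blast
    have xp: "(\<lambda>p. x i (fst p) (snd p)) \<in> borel_measurable (Bor a b \<Otimes>\<^sub>M Bor a b)"
      using xp0 by (simp add: case_prod_beta')
    note [measurable] = xp tLm[OF i] tWm[OF i]
    have "(\<lambda>p. tW i (fst p) * x i (fst p) (snd p) + tL i (fst p) * (1 - x i (fst p) (snd p)))
        \<in> borel_measurable (Bor a b \<Otimes>\<^sub>M Bor a b)" by measurable
    then show "(\<lambda>(u, v). t2 i u v) \<in> borel_measurable (Bor a b \<Otimes>\<^sub>M Bor a b)"
      by (simp add: t2_def case_prod_beta')
    show "\<exists>C. \<forall>u\<in>{a..b}. \<forall>v\<in>{a..b}. \<bar>t2 i u v\<bar> \<le> C"
    proof (intro exI ballI)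
      fix u v assume u: "u \<in> {a..b}" and v: "v \<in> {a..b}"
      have x01: "0 \<le> x i u v" "x i u v \<le> 1" using x_bounds[OF al i u v] by auto
      have "\<bar>tW i u * x i u v\<bar> \<le> \<bar>tW i u\<bar>" using x01 by (simp add: abs_mult mult_left_le)
      moreover have "\<bar>tL i u * (1 - x i u v)\<bar> \<le> \<bar>tL i u\<bar>" using x01 by (simp add: abs_mult mult_left_le)
      ultimately show "\<bar>t2 i u v\<bar> \<le> (\<bar>a\<bar> + \<bar>b\<bar> + B + (B + (b - a))) + (B + (b - a))"
        using tWb[OF i u] tLb[OF i u] unfolding t2_def by linarith
    qed
  qed
  have R2: "constraints_R a b D P \<eta> \<alpha> \<beta> K x t2"
    unfolding constraints_R_def
  proof (intro conjI)
    show "transfer_rule a b t2" using t2m by (simp add: transfer_rule_def)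
    show "win_lose_dependent a b x t2" unfolding win_lose_dependent_def
      by (rule exI[of _ tW], rule exI[of _ tL]) (use csb(1) in \<open>auto simp: t2_def tW_def\<close>)
    show "\<forall>i\<in>{1, 2}. \<forall>th\<in>{a..b}. Umin a b D P \<eta> x t2 i th = integral {a..th} (Xmin a b D P \<eta> x i)"
    proof (intro ballI)
      fix i :: nat and th assume i: "i \<in> {1,2}" and th: "th \<in> {a..b}"
      have rep: "\<And>v. v \<in> {a..b} \<Longrightarrow> t2 i th v = tW i th * x i th v + tL i th * (1 - x i th v)"
        by (simp add: t2_def)
      have c: "th - tW i th + tL i th \<ge> 0" using csb(1)[OF i th] by (simp add: tW_def)
      have "Umin a b D P \<eta> x t2 i th = Urep a b D P \<eta> x t2 i th th" by (rule Urep_Umin[symmetric])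
      also have "\<dots> = (th - tW i th + tL i th) * Xmin a b D P \<eta> x i th - tL i th"
        by (rule Urep_wl(2)[where tW="tW i th" and tL="tL i th" and t=t2, OF al i th Pa rep c])
      also have "\<dots> = integral {a..th} (Xmin a b D P \<eta> x i)"
        by (simp add: tW_def tL_def V_def Xm_def)
      finally show "Umin a b D P \<eta> x t2 i th = integral {a..th} (Xmin a b D P \<eta> x i)" .
    qed
    show "Tclass a b \<alpha> \<beta> K x t2" unfolding Tclass_def
    proof (intro ballI impI)
      fix i :: nat and th tw tl assume i: "i \<in> {1,2}" and th: "th \<in> {a..b}" and "th < b"
        and w: "tw \<in> {a..b}" and l: "tl \<in> {a..b}" and xx: "x i th tw = 1 \<and> x i th tl = 0"
      have "\<alpha> * t2 i th tw - \<beta> * t2 i th tl = \<alpha> * tW i th - \<beta> * tL i th" using xx by (simp add: t2_def)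
      also have "\<dots> = \<alpha> * th + (\<beta> - \<alpha>) * V i th - cs i th * (\<alpha> + (\<beta> - \<alpha>) * Xm i th)"
        by (simp add: tW_def tL_def algebra_simps)
      also have "\<dots> \<le> K" using csb(3)[OF i th] by simp
      finally show "\<alpha> * t2 i th tw - \<beta> * t2 i th tl \<le> K" .
    qed
  qed
  have rev2: "revenue P t2 \<le> revenue P t" using sol R2 unfolding solves_def by blast
  have tr': "transfer_rule a b t'" and feas': "feasible a b D P \<eta> x t'" and Tc': "Tclass a b \<alpha> \<beta> K x t'"
    using t' unfolding constraints_P_def by auto
  have tm': "bounded_measurable_rule a b t'" using tr' by (simp add: transfer_rule_def)
  have bmem: "b \<in> {a..b}" using P.not_empty sP by auto
  have Pb: "emeasure P {b} = 0" by (rule atomless_single[OF atl Pp bmem])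
  have aeb: "AE th in P. th \<noteq> b" by (rule amb_single[OF D Pp Pa Pb bmem])
  have each: "(\<integral>th. Texp P t' i th \<partial>P) \<le> (\<integral>th. Texp P t2 i th \<partial>P)" if i: "i \<in> {1,2}" for i
  proof (rule integral_mono_AE)
    show "integrable P (Texp P t' i)" by (rule Texp_int[OF Pp tm' i])
    show "integrable P (Texp P t2 i)" by (rule Texp_int[OF Pp t2m i])
    show "AE th in P. Texp P t' i th \<le> Texp P t2 i th"
      using aeb
    proof (rule AE_mp[OF _ AE_I2], intro impI)
      fix th assume "th \<in> space P" and thb: "th \<noteq> b"
      then have th: "th \<in> {a..b}" and thb': "th < b" using sP by auto
      have xbd: "\<And>v. v \<in> {a..b} \<Longrightarrow> \<bar>x i th v\<bar> \<le> 1" using x_bounds[OF al i th] by fastforce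
      have "Texp P t2 i th = (\<integral>v. (tW i th - tL i th) * x i th v - (- tL i th) \<partial>P)"
        unfolding Texp_def by (rule int_Q_cong[OF Pp]) (simp add: t2_def algebra_simps)
      also have "\<dots> = (tW i th - tL i th) * Xexp P x i th - (- tL i th)"
        unfolding Xexp_def by (rule int_Q_aff[OF Pp sect_meas[OF xm i th] xbd])
      also have "\<dots> = th * Xexp P x i th - V i th - cs i th * (Xexp P x i th - Xm i th)"
        by (simp add: tW_def tL_def algebra_simps)
      finally have T2: "Texp P t2 i th = th * Xexp P x i th - V i th - cs i th * (Xexp P x i th - Xm i th)" .
      have "Texp P t' i th \<le> th * Xexp P x i th - V i th - cs i th * (Xexp P x i th - Xm i th)"
        using pointwise[OF D Pp eta atl al AX tr' feas' Tc' ab i th thb'] by (simp add: V_def cs_def Xm_def)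
      then show "Texp P t' i th \<le> Texp P t2 i th" using T2 by simp
    qed
  qed
  have "revenue P t' \<le> revenue P t2" unfolding revenue_def by (rule sum_mono) (use each in auto)
  then show ?thesis using rev2 by simp
qed

theorem theorem1:
  fixes a b \<eta> \<alpha> \<beta> K :: real
    and D :: "real measure \<Rightarrow> real measure \<Rightarrow> ennreal"
    and P :: "real measure"
    and x t :: "nat \<Rightarrow> real \<Rightarrow> real \<Rightarrow> real"
  assumes "0 < a" and "a < b"
    and "assumption_D a b D"
    and "prob_on {a..b} (sets (Bor a b)) P" and "atomless P"
    and "\<eta> > 0"
    and "allocation_rule a b x"
    and "assumption_X a b D P \<eta> x"
    and "0 \<le> \<alpha>" and "\<alpha> \<le> \<beta>" and "\<beta> \<le> 1" and "K \<ge> 0"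
    and "solves P (constraints_R a b D P \<eta> \<alpha> \<beta> K x) t"
  shows "solves P (constraints_P a b D P \<eta> \<alpha> \<beta> K x) t"
proof -
  have R: "constraints_R a b D P \<eta> \<alpha> \<beta> K x t" using assms(13) unfolding solves_def by blast
  have F: "feasible a b D P \<eta> x t" by (rule partA[OF assms(3,4,6,7,8) R])
  have CP: "constraints_P a b D P \<eta> \<alpha> \<beta> K x t"
    using R F unfolding constraints_P_def constraints_R_def by blast
  have "\<forall>t'. constraints_P a b D P \<eta> \<alpha> \<beta> K x t' \<longrightarrow> revenue P t' \<le> revenue P t"
    using partB[OF assms(3,4,6,5,7,8,9,10,11,12,13)] by blast
  then show ?thesis using CP unfolding solves_def by blast
qed

end
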